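(* Let $X$ be a $d$-dimensional clique complex, let $d_1$ satisfy $3d_1\le d-2$, and assume $X$ is $d_1$-well-connected. Let $\nu:\widetilde{F^{d_1}X}\to F^{d_1}X$ be an $\ell$-covering map. Then there exists an $\ell$-covering map $\rho:Y\to X$ and an isomorphism of simplicial complexes $\iota:F^{d_1}Y\to\widetilde{F^{d_1}X}$ satisfying $\nu(\iota(\tilde s))=\rho(\tilde s)$ for every vertex $\tilde s$ of $F^{d_1}Y$.
   Context: A pure $d$-dimensional simplicial complex $X$; $X(i)$ = faces with $i+1$ vertices; link $X_r=\{t\setminus r:r\subseteq t\in X\}$. Clique complex: every set of vertices pairwise joined by edges is a face. Faces complex $F^{d_1}X$: vertex set $X(d_1)$, faces the sets $\{s_0,\dots,s_j\}$ of pairwise disjoint $d_1$-faces with $s_0\cup\dots\cup s_j\in X$; $F^{d_1}X_r:=F^{d_1}(X_r)$. Covering map: $\rho:Y(0)\to X(0)$ a surjective simplicial homomorphism restricting to an isomorphism $Y_{\tilde v}\to X_{\rho(\tilde v)}$ for every vertex $\tilde v$; $\ell$-cover if each vertex has $\ell$ preimages. A connected complex is simply connected if every $\ell$-cover of it is a disjoint union of $\ell$ connected components each mapped isomorphically onto it. $X$ is $d_1$-well-connected if for every face $r$ of dimension $\le d_1$ (including $\emptyset$), $F^{d_1}(X_r)$ is connected, and for every vertex $r$ it is moreover simply connected. *)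

theory Defs
  imports Main
begin

text \<open>Simplicial complexes are represented by their set of faces (including the empty face).\<close>

definition simplicial_complex :: "'a set set \<Rightarrow> bool" where
  "simplicial_complex X \<longleftrightarrow> (\<forall>s\<in>X. finite s) \<and> (\<forall>s\<in>X. \<forall>t. t \<subseteq> s \<longrightarrow> t \<in> X)"

definition faces_of_dim :: "'a set set \<Rightarrow> nat \<Rightarrow> 'a set set" where
  "faces_of_dim X i = {s \<in> X. card s = i + 1}"

definition vertices :: "'a set set \<Rightarrow> 'a set" where
  "vertices X = {v. {v} \<in> X}"

definition pure_complex :: "nat \<Rightarrow> 'a set set \<Rightarrow> bool" where
  "pure_complex d X \<longleftrightarrow> simplicial_complex X
     \<and> (\<exists>t\<in>X. card t = d + 1)
     \<and> (\<forall>s\<in>X. card s \<le> d + 1)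
     \<and> (\<forall>s\<in>X. \<exists>t\<in>X. s \<subseteq> t \<and> card t = d + 1)"

definition link :: "'a set set \<Rightarrow> 'a set \<Rightarrow> 'a set set" where
  "link X r = {t - r | t. t \<in> X \<and> r \<subseteq> t}"

definition clique_complex :: "'a set set \<Rightarrow> bool" where
  "clique_complex X \<longleftrightarrow> (\<forall>s. finite s \<and> s \<subseteq> vertices X \<and> (\<forall>u\<in>s. \<forall>v\<in>s. u \<noteq> v \<longrightarrow> {u, v} \<in> X) \<longrightarrow> s \<in> X)"

definition faces_complex :: "nat \<Rightarrow> 'a set set \<Rightarrow> 'a set set set" where
  "faces_complex d1 X = {S. finite S \<and> S \<subseteq> faces_of_dim X d1 \<and> (\<forall>s\<in>S. \<forall>t\<in>S. s \<noteq> t \<longrightarrow> s \<inter> t = {}) \<and> \<Union>S \<in> X}"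

definition simplicial_hom :: "('a \<Rightarrow> 'b) \<Rightarrow> 'a set set \<Rightarrow> 'b set set \<Rightarrow> bool" where
  "simplicial_hom f A B \<longleftrightarrow> f ` vertices A \<subseteq> vertices B \<and> (\<forall>s\<in>A. f ` s \<in> B)"

definition simplicial_iso :: "('a \<Rightarrow> 'b) \<Rightarrow> 'a set set \<Rightarrow> 'b set set \<Rightarrow> bool" where
  "simplicial_iso f A B \<longleftrightarrow> bij_betw f (vertices A) (vertices B)
     \<and> (\<forall>s. s \<subseteq> vertices A \<longrightarrow> (s \<in> A \<longleftrightarrow> f ` s \<in> B))"

definition covering_map :: "('b \<Rightarrow> 'a) \<Rightarrow> 'b set set \<Rightarrow> 'a set set \<Rightarrow> bool" where
  "covering_map \<rho> Y X \<longleftrightarrow> simplicial_hom \<rho> Y X \<and> \<rho> ` vertices Y = vertices X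
     \<and> (\<forall>v\<in>vertices Y. simplicial_iso \<rho> (link Y {v}) (link X {\<rho> v}))"

definition l_covering_map :: "nat \<Rightarrow> ('b \<Rightarrow> 'a) \<Rightarrow> 'b set set \<Rightarrow> 'a set set \<Rightarrow> bool" where
  "l_covering_map l \<rho> Y X \<longleftrightarrow> simplicial_complex Y \<and> covering_map \<rho> Y X
     \<and> (\<forall>v\<in>vertices X. finite {w \<in> vertices Y. \<rho> w = v} \<and> card {w \<in> vertices Y. \<rho> w = v} = l)"

definition edge_rel :: "'a set set \<Rightarrow> ('a \<times> 'a) set" where
  "edge_rel X = {(u, v). {u, v} \<in> X}"

definition connected_complex :: "'a set set \<Rightarrow> bool" where
  "connected_complex X \<longleftrightarrow> (\<forall>u\<in>vertices X. \<forall>v\<in>vertices X. (u, v) \<in> (edge_rel X)\<^sup>*)"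

definition components :: "'a set set \<Rightarrow> 'a set set" where
  "components X = {{u \<in> vertices X. (w, u) \<in> (edge_rel X)\<^sup>*} | w. w \<in> vertices X}"

text \<open>Covers are taken with vertex type
  'a \<times> nat, which is no loss of generality (every l-cover is isomorphic to one of this form).\<close>
definition simply_connected :: "'a set set \<Rightarrow> bool" where
  "simply_connected X \<longleftrightarrow> connected_complex X \<and>
     (\<forall>l (Y :: ('a \<times> nat) set set) \<rho>. l_covering_map l \<rho> Y X \<longrightarrow>
        card (components Y) = l \<and>
        (\<forall>C\<in>components Y. simplicial_iso \<rho> {s \<in> Y. s \<subseteq> C} X))"

definition well_connected :: "nat \<Rightarrow> 'a set set \<Rightarrow> bool" where
  "well_connected d1 X \<longleftrightarrow> (\<forall>r\<in>X. card r \<le> d1 + 1 \<longrightarrow>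
       connected_complex (faces_complex d1 (link X r))
     \<and> (card r = 1 \<longrightarrow> simply_connected (faces_complex d1 (link X r))))"

end

theory Submission
  imports Defs
begin



lemma mem_link: "\<tau> \<in> link X r \<longleftrightarrow> \<tau> \<inter> r = {} \<and> \<tau> \<union> r \<in> X"
proof
  assume "\<tau> \<in> link X r"
  then obtain t where "t \<in> X" "r \<subseteq> t" "\<tau> = t - r" unfolding link_def by blast
  moreover have "t - r \<union> r = t" using \<open>r \<subseteq> t\<close> by blast
  ultimately show "\<tau> \<inter> r = {} \<and> \<tau> \<union> r \<in> X" by auto
next
  assume a: "\<tau> \<inter> r = {} \<and> \<tau> \<union> r \<in> X"
  then have "\<tau> = (\<tau> \<union> r) - r" by blast
  then show "\<tau> \<in> link X r" unfolding link_def using a by blast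
qed

lemma vert_iff: "v \<in> vertices X \<longleftrightarrow> {v} \<in> X"
  by (simp add: vertices_def)

lemma vert_link: "vertices (link X {v}) = {w. w \<noteq> v \<and> {v,w} \<in> X}"
  unfolding vertices_def mem_link by (auto simp: insert_commute)

lemma edge_rel_iff: "(u,v) \<in> edge_rel X \<longleftrightarrow> {u,v} \<in> X"
  by (simp add: edge_rel_def)

lemma sc_sub: "simplicial_complex X \<Longrightarrow> s \<in> X \<Longrightarrow> t \<subseteq> s \<Longrightarrow> t \<in> X"
  unfolding simplicial_complex_def by blast

lemma sc_fin: "simplicial_complex X \<Longrightarrow> s \<in> X \<Longrightarrow> finite s"
  unfolding simplicial_complex_def by blast

lemma sc_vert: "simplicial_complex X \<Longrightarrow> s \<in> X \<Longrightarrow> x \<in> s \<Longrightarrow> x \<in> vertices X"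
  unfolding vertices_def using sc_sub by blast


lemma faces_of_dim_iff: "s \<in> faces_of_dim X i \<longleftrightarrow> s \<in> X \<and> card s = i + 1"
  by (simp add: faces_of_dim_def)

lemma vert_fc: "vertices (faces_complex d1 X) = faces_of_dim X d1"
  unfolding vertices_def faces_complex_def faces_of_dim_def by auto


lemma link_sc: assumes "simplicial_complex X" shows "simplicial_complex (link X r)"
  unfolding simplicial_complex_def
proof (intro conjI ballI allI impI)
  fix s assume "s \<in> link X r"
  then have "s \<union> r \<in> X" by (simp add: mem_link)
  then have "finite (s \<union> r)" using sc_fin[OF assms] by blast
  then show "finite s" by simp
next
  fix s t assume a: "s \<in> link X r" "t \<subseteq> s"
  then have "s \<union> r \<in> X" "s \<inter> r = {}" by (auto simp: mem_link)
  moreover have "t \<union> r \<subseteq> s \<union> r" using a(2) by blast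
  ultimately have "t \<union> r \<in> X" "t \<inter> r = {}" using sc_sub[OF assms] a(2) by blast+
  then show "t \<in> link X r" by (simp add: mem_link)
qed

lemma fc_sc: assumes "simplicial_complex X" shows "simplicial_complex (faces_complex d1 X)"
  unfolding simplicial_complex_def faces_complex_def
proof (intro conjI ballI allI impI; clarify?)
  fix S T assume "finite S" "S \<subseteq> faces_of_dim X d1" "\<forall>s\<in>S. \<forall>t\<in>S. s \<noteq> t \<longrightarrow> s \<inter> t = {}"
    "\<Union> S \<in> X" "T \<subseteq> S"
  then show "finite T \<and> T \<subseteq> faces_of_dim X d1 \<and> (\<forall>s\<in>T. \<forall>t\<in>T. s \<noteq> t \<longrightarrow> s \<inter> t = {}) \<and> \<Union> T \<in> X"
  proof (intro conjI)
    show "\<Union>T \<in> X" using sc_sub[OF assms, of "\<Union>S" "\<Union>T"] \<open>\<Union> S \<in> X\<close> \<open>T \<subseteq> S\<close> by blast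
    show "finite T" using \<open>T \<subseteq> S\<close> \<open>finite S\<close> finite_subset by blast
    show "T \<subseteq> faces_of_dim X d1" using \<open>T \<subseteq> S\<close> \<open>S \<subseteq> faces_of_dim X d1\<close> by blast
    show "\<forall>s\<in>T. \<forall>t\<in>T. s \<noteq> t \<longrightarrow> s \<inter> t = {}" using \<open>T \<subseteq> S\<close> \<open>\<forall>s\<in>S. \<forall>t\<in>S. s \<noteq> t \<longrightarrow> s \<inter> t = {}\<close> by blast
  qed
qed


lemma fc_link_iff:
  assumes "simplicial_complex X"
  shows "S \<in> faces_complex d1 (link X r) \<longleftrightarrow> S \<in> faces_complex d1 X \<and> \<Union>S \<inter> r = {} \<and> \<Union>S \<union> r \<in> X"
proof
  assume a: "S \<in> faces_complex d1 (link X r)"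
  then have u: "\<Union>S \<inter> r = {}" "\<Union>S \<union> r \<in> X" unfolding faces_complex_def mem_link by auto
  have "\<Union>S \<in> X" using sc_sub[OF assms u(2)] by blast
  moreover have "S \<subseteq> faces_of_dim X d1"
  proof
    fix s assume "s \<in> S"
    then have "s \<union> r \<subseteq> \<Union>S \<union> r" "card s = d1+1" using a unfolding faces_complex_def faces_of_dim_def by auto
    then have "s \<union> r \<in> X" using sc_sub[OF assms u(2)] by blast
    then have "s \<in> X" using sc_sub[OF assms] by blast
    then show "s \<in> faces_of_dim X d1" using \<open>card s = d1+1\<close> by (simp add: faces_of_dim_def)
  qed
  ultimately show "S \<in> faces_complex d1 X \<and> \<Union>S \<inter> r = {} \<and> \<Union>S \<union> r \<in> X"
    using a u unfolding faces_complex_def by auto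
next
  assume a: "S \<in> faces_complex d1 X \<and> \<Union>S \<inter> r = {} \<and> \<Union>S \<union> r \<in> X"
  have "S \<subseteq> faces_of_dim (link X r) d1"
  proof
    fix s assume "s \<in> S"
    then have c: "card s = d1+1" "s \<subseteq> \<Union>S" using a unfolding faces_complex_def faces_of_dim_def by auto
    then have "s \<inter> r = {}" "s \<union> r \<subseteq> \<Union>S \<union> r" using a by auto
    moreover have "s \<union> r \<in> X" using sc_sub[OF assms] a calculation(2) by blast
    ultimately show "s \<in> faces_of_dim (link X r) d1" using c unfolding faces_of_dim_def mem_link by auto
  qed
  then show "S \<in> faces_complex d1 (link X r)" using a unfolding faces_complex_def mem_link by auto
qed




lemma cov_link_iso:
  "covering_map \<pi> A B \<Longrightarrow> z \<in> vertices A \<Longrightarrow> simplicial_iso \<pi> (link A {z}) (link B {\<pi> z})"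
  unfolding covering_map_def by blast



lemma cov_adj:
  assumes c: "covering_map \<pi> A B" and sA: "simplicial_complex A" and "{z,a} \<in> A" and "a \<noteq> z"
  shows "\<pi> a \<noteq> \<pi> z \<and> {\<pi> z, \<pi> a} \<in> B"
proof -
  have zv: "z \<in> vertices A" using sc_sub[OF sA assms(3), of "{z}"] by (simp add: vert_iff)
  have "a \<in> vertices (link A {z})" using assms by (simp add: vert_link)
  then have "\<pi> a \<in> vertices (link B {\<pi> z})"
    using cov_link_iso[OF c zv] unfolding simplicial_iso_def bij_betw_def by blast
  then show ?thesis by (simp add: vert_link)
qed

lemma cov_inj:
  assumes c: "covering_map \<pi> A B" and sA: "simplicial_complex A" and "\<sigma> \<in> A"
  shows "inj_on \<pi> \<sigma>"
proof (rule inj_onI, rule ccontr)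
  fix a b assume "a \<in> \<sigma>" "b \<in> \<sigma>" "\<pi> a = \<pi> b" "a \<noteq> b"
  then have "{a,b} \<subseteq> \<sigma>" by blast
  then have "{a,b} \<in> A" using sc_sub[OF sA assms(3)] by blast
  then have "\<pi> b \<noteq> \<pi> a" using cov_adj[OF c sA, of a b] \<open>a \<noteq> b\<close> by blast
  then show False using \<open>\<pi> a = \<pi> b\<close> by simp
qed

lemma cov_adj_inj:
  assumes c: "covering_map \<pi> A B" and sA: "simplicial_complex A"
    and "{z,a} \<in> A" "{z,b} \<in> A" "\<pi> a = \<pi> b"
  shows "a = b"
proof (cases "a = z \<or> b = z")
  case True
  show ?thesis
  proof (rule ccontr)
    assume ne: "a \<noteq> b"
    show False
    proof (cases "a = z")
      case True
      then have "b \<noteq> z" using ne by simp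
      then show False using cov_adj[OF c sA assms(4)] assms(5) True by simp
    next
      case False
      then have "b = z" using \<open>a = z \<or> b = z\<close> by simp
      then show False using cov_adj[OF c sA assms(3) False] assms(5) by simp
    qed
  qed
next
  case False
  have zv: "z \<in> vertices A" using sc_sub[OF sA assms(3), of "{z}"] by (simp add: vert_iff)
  have "a \<in> vertices (link A {z})" "b \<in> vertices (link A {z})" using assms False by (auto simp: vert_link)
  moreover have "inj_on \<pi> (vertices (link A {z}))" using cov_link_iso[OF c zv] unfolding simplicial_iso_def bij_betw_def by blast
  ultimately show ?thesis using assms(5) by (meson inj_onD)
qed

lemma cov_lift:
  assumes c: "covering_map \<pi> A B" and sA: "simplicial_complex A" and sB: "simplicial_complex B"
    and S: "S \<in> B" and z: "z \<in> vertices A" and zS: "\<pi> z \<in> S"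
  shows "\<exists>\<sigma>\<in>A. z \<in> \<sigma> \<and> \<pi> ` \<sigma> = S"
proof -
  have iso: "simplicial_iso \<pi> (link A {z}) (link B {\<pi> z})" using cov_link_iso[OF c z] .
  let ?T = "S - {\<pi> z}"
  have T: "?T \<in> link B {\<pi> z}" using S zS by (auto simp: mem_link insert_absorb)
  have Tv: "?T \<subseteq> vertices (link B {\<pi> z})"
  proof
    fix u assume "u \<in> ?T"
    then have "{\<pi> z, u} \<subseteq> S" "u \<noteq> \<pi> z" using zS by auto
    then show "u \<in> vertices (link B {\<pi> z})" using sc_sub[OF sB S] by (simp add: vert_link)
  qed
  define \<tau> where "\<tau> = {a \<in> vertices (link A {z}). \<pi> a \<in> ?T}"
  have bij: "bij_betw \<pi> (vertices (link A {z})) (vertices (link B {\<pi> z}))"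
    using iso unfolding simplicial_iso_def by blast
  have img: "\<pi> ` \<tau> = ?T"
  proof
    show "\<pi> ` \<tau> \<subseteq> ?T" unfolding \<tau>_def by (rule image_subsetI) simp
    show "?T \<subseteq> \<pi> ` \<tau>"
    proof
      fix u assume u: "u \<in> ?T"
      then have "u \<in> \<pi> ` vertices (link A {z})" using bij Tv unfolding bij_betw_def by blast
      then obtain a where "a \<in> vertices (link A {z})" "u = \<pi> a" by blast
      then show "u \<in> \<pi> ` \<tau>" unfolding \<tau>_def using u by blast
    qed
  qed
  have "\<tau> \<subseteq> vertices (link A {z})" unfolding \<tau>_def by blast
  moreover have "\<forall>s. s \<subseteq> vertices (link A {z}) \<longrightarrow> (s \<in> link A {z} \<longleftrightarrow> \<pi> ` s \<in> link B {\<pi> z})"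
    using iso unfolding simplicial_iso_def by blast
  ultimately have "\<tau> \<in> link A {z}" using img T by metis
  then have "\<tau> \<union> {z} \<in> A" by (simp add: mem_link)
  moreover have "\<pi> ` (\<tau> \<union> {z}) = S" using img zS by blast
  ultimately show ?thesis by blast
qed




lemma iso_bij: "simplicial_iso f A B \<Longrightarrow> bij_betw f (vertices A) (vertices B)"
  unfolding simplicial_iso_def by (rule conjunct1)

lemma iso_face: "simplicial_iso f A B \<Longrightarrow> s \<subseteq> vertices A \<Longrightarrow> (s \<in> A \<longleftrightarrow> f ` s \<in> B)"
  unfolding simplicial_iso_def by (drule conjunct2) (erule allE, erule mp)

lemma isoI: "bij_betw f (vertices A) (vertices B) \<Longrightarrow> (\<And>s. s \<subseteq> vertices A \<Longrightarrow> (s \<in> A \<longleftrightarrow> f ` s \<in> B)) \<Longrightarrow> simplicial_iso f A B"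
  unfolding simplicial_iso_def by (intro conjI allI impI)

lemma sc_face_vert: "simplicial_complex A \<Longrightarrow> s \<in> A \<Longrightarrow> s \<subseteq> vertices A"
  by (meson sc_vert subsetI)

lemma restr_iso:
  assumes iso: "simplicial_iso f A B" and sub: "B' \<subseteq> B"
  shows "simplicial_iso f {\<sigma>\<in>A. f ` \<sigma> \<in> B'} B'"
proof (rule isoI)
  have vA': "vertices {\<sigma>\<in>A. f ` \<sigma> \<in> B'} = {x \<in> vertices A. f x \<in> vertices B'}"
    unfolding vertices_def by auto
  have vB': "vertices B' \<subseteq> vertices B" using sub unfolding vertices_def by blast
  have bij: "bij_betw f (vertices A) (vertices B)" using iso_bij[OF iso] .
  show "bij_betw f (vertices {\<sigma>\<in>A. f ` \<sigma> \<in> B'}) (vertices B')"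
    unfolding vA' bij_betw_def
  proof
    show "inj_on f {x \<in> vertices A. f x \<in> vertices B'}"
      using bij unfolding bij_betw_def by (rule conjE) (erule inj_on_subset, blast)
    show "f ` {x \<in> vertices A. f x \<in> vertices B'} = vertices B'"
    proof
      show "f ` {x \<in> vertices A. f x \<in> vertices B'} \<subseteq> vertices B'" by blast
      show "vertices B' \<subseteq> f ` {x \<in> vertices A. f x \<in> vertices B'}"
      proof
        fix y assume "y \<in> vertices B'"
        then have "y \<in> f ` vertices A" using vB' bij unfolding bij_betw_def by blast
        then obtain x where "x \<in> vertices A" "y = f x" by blast
        then show "y \<in> f ` {x \<in> vertices A. f x \<in> vertices B'}" using \<open>y \<in> vertices B'\<close> by blast
      qed
    qed
  qed
  fix s assume s: "s \<subseteq> vertices {\<sigma>\<in>A. f ` \<sigma> \<in> B'}"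
  then have sA: "s \<subseteq> vertices A" unfolding vA' by blast
  show "s \<in> {\<sigma>\<in>A. f ` \<sigma> \<in> B'} \<longleftrightarrow> f ` s \<in> B'"
  proof
    assume "f ` s \<in> B'"
    then have "f ` s \<in> B" using sub by blast
    then have "s \<in> A" using iso_face[OF iso sA] by blast
    then show "s \<in> {\<sigma>\<in>A. f ` \<sigma> \<in> B'}" using \<open>f ` s \<in> B'\<close> by blast
  qed simp
qed

lemma link_mono: "B' \<subseteq> B \<Longrightarrow> link B' r \<subseteq> link B r"
  unfolding link_def by blast

lemma restr_cov:
  assumes cov: "l_covering_map l \<pi> A B" and sub: "B' \<subseteq> B" and sB': "simplicial_complex B'"
  shows "l_covering_map l \<pi> {\<sigma>\<in>A. \<pi> ` \<sigma> \<in> B'} B'"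
proof -
  let ?A = "{\<sigma>\<in>A. \<pi> ` \<sigma> \<in> B'}"
  have sA: "simplicial_complex A" and c: "covering_map \<pi> A B"
    and fib: "\<forall>v\<in>vertices B. finite {w \<in> vertices A. \<pi> w = v} \<and> card {w \<in> vertices A. \<pi> w = v} = l"
    using cov unfolding l_covering_map_def by blast+
  have hom: "simplicial_hom \<pi> A B" and surj: "\<pi> ` vertices A = vertices B"
    using c unfolding covering_map_def by blast+
  have vA': "vertices ?A = {x \<in> vertices A. \<pi> x \<in> vertices B'}"
    unfolding vertices_def by auto
  have vB': "vertices B' \<subseteq> vertices B" using sub unfolding vertices_def by blast
  have sA': "simplicial_complex ?A"
    unfolding simplicial_complex_def
  proof (intro conjI ballI allI impI)
    fix s assume "s \<in> ?A" then show "finite s" using sc_fin[OF sA] by blast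
  next
    fix s t assume "s \<in> ?A" "t \<subseteq> s"
    then have "t \<in> A" "\<pi> ` t \<in> B'" using sc_sub[OF sA, of s t] sc_sub[OF sB', of "\<pi> ` s" "\<pi> ` t"] by auto
    then show "t \<in> ?A" by blast
  qed
  have fib': "{w \<in> vertices ?A. \<pi> w = v} = {w \<in> vertices A. \<pi> w = v}" if "v \<in> vertices B'" for v
    unfolding vA' using that by auto
  have surj': "\<pi> ` vertices ?A = vertices B'"
  proof
    show "\<pi> ` vertices ?A \<subseteq> vertices B'" unfolding vA' by blast
    show "vertices B' \<subseteq> \<pi> ` vertices ?A"
    proof
      fix v assume "v \<in> vertices B'"
      then have "v \<in> \<pi> ` vertices A" using vB' surj by blast
      then obtain x where "x \<in> vertices A" "v = \<pi> x" by blast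
      then show "v \<in> \<pi> ` vertices ?A" unfolding vA' using \<open>v \<in> vertices B'\<close> by blast
    qed
  qed
  have hom': "simplicial_hom \<pi> ?A B'" unfolding simplicial_hom_def using surj' by blast
  have links: "simplicial_iso \<pi> (link ?A {z}) (link B' {\<pi> z})" if z: "z \<in> vertices ?A" for z
  proof -
    have zA: "z \<in> vertices A" using z vA' by blast
    have eq: "link ?A {z} = {\<tau> \<in> link A {z}. \<pi> ` \<tau> \<in> link B' {\<pi> z}}"
    proof (intro set_eqI iffI)
      fix \<tau> assume "\<tau> \<in> link ?A {z}"
      then have t: "\<tau> \<inter> {z} = {}" "\<tau> \<union> {z} \<in> A" "\<pi> ` (\<tau> \<union> {z}) \<in> B'" by (auto simp: mem_link)
      have "inj_on \<pi> (\<tau> \<union> {z})" using cov_inj[OF c sA t(2)] .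
      then have "\<pi> ` \<tau> \<inter> {\<pi> z} = {}" using t(1) by auto
      moreover have "\<pi> ` \<tau> \<union> {\<pi> z} = \<pi> ` (\<tau> \<union> {z})" by simp
      ultimately show "\<tau> \<in> {\<tau> \<in> link A {z}. \<pi> ` \<tau> \<in> link B' {\<pi> z}}" using t by (simp add: mem_link)
    next
      fix \<tau> assume "\<tau> \<in> {\<tau> \<in> link A {z}. \<pi> ` \<tau> \<in> link B' {\<pi> z}}"
      then have t: "\<tau> \<inter> {z} = {}" "\<tau> \<union> {z} \<in> A" "\<pi> ` \<tau> \<union> {\<pi> z} \<in> B'" by (auto simp: mem_link)
      moreover have "\<pi> ` \<tau> \<union> {\<pi> z} = \<pi> ` (\<tau> \<union> {z})" by simp
      ultimately show "\<tau> \<in> link ?A {z}" by (simp add: mem_link)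
    qed
    show ?thesis unfolding eq
      by (rule restr_iso[OF cov_link_iso[OF c zA] link_mono[OF sub]])
  qed
  have "\<forall>v\<in>vertices B'. finite {w \<in> vertices ?A. \<pi> w = v} \<and> card {w \<in> vertices ?A. \<pi> w = v} = l"
  proof
    fix v assume v: "v \<in> vertices B'"
    then have "v \<in> vertices B" using vB' by blast
    then show "finite {w \<in> vertices ?A. \<pi> w = v} \<and> card {w \<in> vertices ?A. \<pi> w = v} = l"
      using fib fib'[OF v] by simp
  qed
  then show ?thesis unfolding l_covering_map_def covering_map_def
    using sA' hom' surj' links by blast
qed




lemma iso_inv:
  assumes iso: "simplicial_iso f A B"
  shows "simplicial_iso (inv_into (vertices A) f) B A"
proof (rule isoI)
  have bij: "bij_betw f (vertices A) (vertices B)" using iso_bij[OF iso] .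
  show "bij_betw (inv_into (vertices A) f) (vertices B) (vertices A)" using bij_betw_inv_into[OF bij] .
  fix s assume s: "s \<subseteq> vertices B"
  let ?g = "inv_into (vertices A) f"
  have gs: "?g ` s \<subseteq> vertices A" using s bij_betw_inv_into[OF bij] unfolding bij_betw_def by blast
  have fg: "f ` (?g ` s) = s"
  proof -
    have "\<forall>y\<in>s. f (?g y) = y"
    proof
      fix y assume "y \<in> s"
      then have "y \<in> f ` vertices A" using s bij unfolding bij_betw_def by blast
      then show "f (?g y) = y" by (rule f_inv_into_f)
    qed
    then show ?thesis by (simp add: image_image)
  qed
  show "s \<in> B \<longleftrightarrow> ?g ` s \<in> A" using iso_face[OF iso gs] fg by simp
qed

lemma iso_comp:
  assumes f: "simplicial_iso f A B" and h: "simplicial_iso h B C"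
  shows "simplicial_iso (h \<circ> f) A C"
proof (rule isoI)
  show "bij_betw (h \<circ> f) (vertices A) (vertices C)" using bij_betw_trans[OF iso_bij[OF f] iso_bij[OF h]] .
  fix s assume s: "s \<subseteq> vertices A"
  then have fs: "f ` s \<subseteq> vertices B" using iso_bij[OF f] unfolding bij_betw_def by blast
  show "s \<in> A \<longleftrightarrow> (h \<circ> f) ` s \<in> C" using iso_face[OF f s] iso_face[OF h fs] by (simp add: image_comp)
qed

lemma img_sc:
  assumes sA: "simplicial_complex A"
  shows "simplicial_complex ((`) g ` A)"
  unfolding simplicial_complex_def
proof (intro conjI ballI allI impI)
  fix s assume "s \<in> (`) g ` A" then show "finite s" using sc_fin[OF sA] by blast
next
  fix s t assume "s \<in> (`) g ` A" "t \<subseteq> s"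
  then obtain \<sigma> where "\<sigma> \<in> A" "s = g ` \<sigma>" by blast
  then have "t = g ` {x \<in> \<sigma>. g x \<in> t}" using \<open>t \<subseteq> s\<close> by auto
  moreover have "{x \<in> \<sigma>. g x \<in> t} \<subseteq> \<sigma>" by blast
  then have "{x \<in> \<sigma>. g x \<in> t} \<in> A" using sc_sub[OF sA \<open>\<sigma> \<in> A\<close>] by simp
  ultimately show "t \<in> (`) g ` A" by blast
qed

lemma img_vert:
  assumes sA: "simplicial_complex A" and inj: "inj_on g (vertices A)"
  shows "vertices ((`) g ` A) = g ` vertices A"
proof (intro set_eqI iffI)
  fix y assume "y \<in> vertices ((`) g ` A)"
  then obtain \<sigma> where s: "\<sigma> \<in> A" "g ` \<sigma> = {y}" unfolding vertices_def by blast
  then obtain x where "x \<in> \<sigma>" by blast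
  then have "{x} \<in> A" using sc_sub[OF sA s(1), of "{x}"] by simp
  moreover have "g x = y" using s \<open>x \<in> \<sigma>\<close> by blast
  ultimately show "y \<in> g ` vertices A" unfolding vertices_def by blast
next
  fix y assume "y \<in> g ` vertices A"
  then obtain x where "{x} \<in> A" "y = g x" unfolding vertices_def by blast
  moreover have "g ` {x} = {g x}" by simp
  ultimately show "y \<in> vertices ((`) g ` A)" unfolding vertices_def by (metis imageI mem_Collect_eq)
qed

lemma img_iso:
  assumes sA: "simplicial_complex A" and inj: "inj_on g (vertices A)"
  shows "simplicial_iso g A ((`) g ` A)"
proof (rule isoI)
  show "bij_betw g (vertices A) (vertices ((`) g ` A))" unfolding img_vert[OF sA inj]
    using inj by (simp add: bij_betw_def)
  fix s assume s: "s \<subseteq> vertices A"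
  show "s \<in> A \<longleftrightarrow> g ` s \<in> (`) g ` A"
  proof
    assume "g ` s \<in> (`) g ` A"
    then obtain \<sigma> where "\<sigma> \<in> A" "g ` s = g ` \<sigma>" by blast
    moreover have "\<sigma> \<subseteq> vertices A" using sc_face_vert[OF sA \<open>\<sigma> \<in> A\<close>] .
    ultimately have "s = \<sigma>" using inj s by (simp add: inj_on_image_eq_iff)
    then show "s \<in> A" using \<open>\<sigma> \<in> A\<close> by simp
  qed simp
qed

lemma img_link:
  assumes sA: "simplicial_complex A" and inj: "inj_on g (vertices A)" and x: "x \<in> vertices A"
  shows "link ((`) g ` A) {g x} = (`) g ` link A {x}"
proof (intro set_eqI iffI)
  fix \<tau>' assume "\<tau>' \<in> link ((`) g ` A) {g x}"
  then have t: "g x \<notin> \<tau>'" "\<tau>' \<union> {g x} \<in> (`) g ` A" by (auto simp: mem_link)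
  then obtain \<sigma> where s: "\<sigma> \<in> A" "\<tau>' \<union> {g x} = g ` \<sigma>" by blast
  have sv: "\<sigma> \<subseteq> vertices A" using sc_face_vert[OF sA s(1)] .
  have "g x \<in> g ` \<sigma>" using s by blast
  then have xs: "x \<in> \<sigma>" using inj sv x by (meson inj_on_image_mem_iff)
  have "g ` (\<sigma> - {x}) = g ` \<sigma> - {g x}" using inj_on_image_set_diff[OF inj, of \<sigma> "{x}"] sv x by auto
  also have "\<dots> = \<tau>'" using s t by blast
  finally have e: "g ` (\<sigma> - {x}) = \<tau>'" .
  have "\<sigma> - {x} \<in> link A {x}" using s xs by (simp add: mem_link insert_absorb)
  then show "\<tau>' \<in> (`) g ` link A {x}" using e by blast
next
  fix \<tau>' assume "\<tau>' \<in> (`) g ` link A {x}"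
  then obtain \<tau> where t: "\<tau> \<in> link A {x}" "\<tau>' = g ` \<tau>" by blast
  then have t2: "x \<notin> \<tau>" "\<tau> \<union> {x} \<in> A" by (auto simp: mem_link)
  have sv: "\<tau> \<union> {x} \<subseteq> vertices A" using sc_face_vert[OF sA t2(2)] .
  have "g x \<notin> g ` \<tau>" using inj sv t2(1) by (simp add: inj_on_image_mem_iff)
  moreover have "g ` \<tau> \<union> {g x} = g ` (\<tau> \<union> {x})" by simp
  then have "g ` \<tau> \<union> {g x} \<in> (`) g ` A" using t2(2) by (metis imageI)
  ultimately show "\<tau>' \<in> link ((`) g ` A) {g x}" using t by (simp add: mem_link)
qed

lemma iso_img2:
  assumes iso: "simplicial_iso \<pi> A0 B0" and sA0: "simplicial_complex A0"
    and inj: "inj_on g (vertices A0)" and eq: "\<And>x. x \<in> vertices A0 \<Longrightarrow> \<pi>' (g x) = \<pi> x"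
  shows "simplicial_iso \<pi>' ((`) g ` A0) B0"
proof (rule isoI)
  have bij: "bij_betw \<pi> (vertices A0) (vertices B0)" using iso_bij[OF iso] .
  have bg: "bij_betw g (vertices A0) (g ` vertices A0)" using inj by (simp add: bij_betw_def)
  have "bij_betw \<pi>' (g ` vertices A0) (vertices B0)"
  proof -
    have "bij_betw (\<pi> \<circ> inv_into (vertices A0) g) (g ` vertices A0) (vertices B0)"
      using bij_betw_trans[OF bij_betw_inv_into[OF bg] bij] .
    moreover have "\<forall>y\<in>g ` vertices A0. (\<pi> \<circ> inv_into (vertices A0) g) y = \<pi>' y"
    proof
      fix y assume "y \<in> g ` vertices A0"
      then obtain x where x: "x \<in> vertices A0" "y = g x" by blast
      then have "inv_into (vertices A0) g y = x" using inj by (simp add: inv_into_f_f)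
      then show "(\<pi> \<circ> inv_into (vertices A0) g) y = \<pi>' y" using eq[OF x(1)] x(2) by simp
    qed
    ultimately show ?thesis by (metis bij_betw_cong)
  qed
  then show "bij_betw \<pi>' (vertices ((`) g ` A0)) (vertices B0)" unfolding img_vert[OF sA0 inj] .
  fix s' assume s': "s' \<subseteq> vertices ((`) g ` A0)"
  then have "s' \<subseteq> g ` vertices A0" unfolding img_vert[OF sA0 inj] .
  then obtain s where s: "s \<subseteq> vertices A0" "s' = g ` s" by (meson subset_imageE)
  have "\<pi>' ` s' = \<pi> ` s" unfolding s(2) image_image
    by (rule image_cong) (use s(1) eq in blast)+
  moreover have "s' \<in> (`) g ` A0 \<longleftrightarrow> s \<in> A0" using iso_face[OF img_iso[OF sA0 inj] s(1)] s(2) by simp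
  ultimately show "s' \<in> (`) g ` A0 \<longleftrightarrow> \<pi>' ` s' \<in> B0" using iso_face[OF iso s(1)] by simp
qed

lemma transport:
  assumes cov: "l_covering_map l \<pi> A B" and inj: "inj_on g (vertices A)"
    and eq: "\<And>x. x \<in> vertices A \<Longrightarrow> \<pi>' (g x) = \<pi> x"
  shows "l_covering_map l \<pi>' ((`) g ` A) B"
proof -
  have sA: "simplicial_complex A" and c: "covering_map \<pi> A B"
    and fib: "\<forall>v\<in>vertices B. finite {w \<in> vertices A. \<pi> w = v} \<and> card {w \<in> vertices A. \<pi> w = v} = l"
    using cov unfolding l_covering_map_def by blast+
  have hom: "simplicial_hom \<pi> A B" and surj: "\<pi> ` vertices A = vertices B"
    using c unfolding covering_map_def by blast+
  let ?A = "(`) g ` A"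
  have vA: "vertices ?A = g ` vertices A" using img_vert[OF sA inj] .
  have ieq: "\<pi>' ` g ` S = \<pi> ` S" if "S \<subseteq> vertices A" for S
    unfolding image_image by (rule image_cong) (use that eq in blast)+
  have surj': "\<pi>' ` vertices ?A = vertices B" using surj ieq[of "vertices A"] unfolding vA by simp
  have hom': "simplicial_hom \<pi>' ?A B" unfolding simplicial_hom_def
  proof
    show "\<pi>' ` vertices ?A \<subseteq> vertices B" using surj' by simp
    show "\<forall>s\<in>?A. \<pi>' ` s \<in> B"
    proof
      fix s assume "s \<in> ?A"
      then obtain \<sigma> where "\<sigma> \<in> A" "s = g ` \<sigma>" by blast
      moreover have "\<sigma> \<subseteq> vertices A" using sc_face_vert[OF sA \<open>\<sigma> \<in> A\<close>] .
      ultimately have "\<pi>' ` s = \<pi> ` \<sigma>" using ieq by simp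
      then show "\<pi>' ` s \<in> B" using hom \<open>\<sigma> \<in> A\<close> unfolding simplicial_hom_def by simp
    qed
  qed
  have links: "simplicial_iso \<pi>' (link ?A {y}) (link B {\<pi>' y})" if y: "y \<in> vertices ?A" for y
  proof -
    obtain x where x: "x \<in> vertices A" "y = g x" using y vA by blast
    have li: "simplicial_iso \<pi> (link A {x}) (link B {\<pi> x})" using cov_link_iso[OF c x(1)] .
    have sL: "simplicial_complex (link A {x})" using link_sc[OF sA] .
    have vL: "vertices (link A {x}) \<subseteq> vertices A"
      unfolding vertices_def mem_link using sc_sub[OF sA] by blast
    have injL: "inj_on g (vertices (link A {x}))" using inj_on_subset[OF inj vL] .
    have "simplicial_iso \<pi>' ((`) g ` link A {x}) (link B {\<pi> x})"
      by (rule iso_img2[OF li sL injL]) (use eq vL in \<open>simp add: subset_iff\<close>)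
    moreover have "\<pi>' y = \<pi> x" using x eq by simp
    ultimately show ?thesis using img_link[OF sA inj x(1)] x by simp
  qed
  have fib': "{w \<in> vertices ?A. \<pi>' w = v} = g ` {w \<in> vertices A. \<pi> w = v}" for v
  proof (intro set_eqI iffI)
    fix w assume "w \<in> {w \<in> vertices ?A. \<pi>' w = v}"
    then obtain x where "x \<in> vertices A" "w = g x" "\<pi>' w = v" unfolding vA by blast
    then show "w \<in> g ` {w \<in> vertices A. \<pi> w = v}" using eq by force
  next
    fix w assume "w \<in> g ` {w \<in> vertices A. \<pi> w = v}"
    then obtain x where "x \<in> vertices A" "w = g x" "\<pi> x = v" by blast
    then show "w \<in> {w \<in> vertices ?A. \<pi>' w = v}" unfolding vA using eq by force
  qed
  have "\<forall>v\<in>vertices B. finite {w \<in> vertices ?A. \<pi>' w = v} \<and> card {w \<in> vertices ?A. \<pi>' w = v} = l"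
  proof
    fix v assume v: "v \<in> vertices B"
    have "inj_on g {w \<in> vertices A. \<pi> w = v}" using inj by (rule inj_on_subset) blast
    then show "finite {w \<in> vertices ?A. \<pi>' w = v} \<and> card {w \<in> vertices ?A. \<pi>' w = v} = l"
      unfolding fib' using fib v by (simp add: card_image)
  qed
  moreover have "covering_map \<pi>' ?A B" unfolding covering_map_def
    using hom' surj' links by (intro conjI ballI) auto
  ultimately show ?thesis unfolding l_covering_map_def
    using img_sc[OF sA] by (intro conjI) auto
qed




lemma edge_sym: "(a,b) \<in> (edge_rel A)\<^sup>* \<Longrightarrow> (b,a) \<in> (edge_rel A)\<^sup>*"
proof -
  have "sym (edge_rel A)" by (rule symI) (simp add: edge_rel_def insert_commute)
  then have "sym ((edge_rel A)\<^sup>*)" by (rule sym_rtrancl)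
  then show "(a,b) \<in> (edge_rel A)\<^sup>* \<Longrightarrow> (b,a) \<in> (edge_rel A)\<^sup>*" by (rule symD)
qed

lemma edge_vert: assumes sA: "simplicial_complex A" and "(a,b) \<in> (edge_rel A)\<^sup>*" and "a \<in> vertices A"
  shows "b \<in> vertices A"
  using assms(2,3)
proof (induction rule: rtrancl_induct)
  case (step y z)
  then have "{y,z} \<in> A" by (simp add: edge_rel_def)
  then have "{z} \<in> A" using sc_sub[OF sA, of "{y,z}" "{z}"] by simp
  then show ?case by (simp add: vert_iff)
qed

locale setting =
  fixes X :: "'a set set" and d d1 l :: nat and Z :: "('a set \<times> nat) set set"
  assumes pure: "pure_complex d X" and clique: "clique_complex X" and dim: "3*d1+2 \<le> d"
    and wc: "well_connected d1 X"
    and cov: "l_covering_map l fst Z (faces_complex d1 X)"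
    and vZ: "vertices Z = faces_of_dim X d1 \<times> {0..<l}"
begin

abbreviation "F \<equiv> faces_complex d1 X"
abbreviation "Fr r \<equiv> faces_complex d1 (link X r)"
definition "Zr r = {\<sigma>\<in>Z. fst ` \<sigma> \<in> Fr r}"
definition "conn r = (edge_rel (Zr r))\<^sup>*"

lemma sX: "simplicial_complex X" using pure unfolding pure_complex_def by blast
lemma sF: "simplicial_complex F" using fc_sc[OF sX] .
lemma sZ: "simplicial_complex Z" using cov unfolding l_covering_map_def by blast
lemma cZ: "covering_map fst Z F" using cov unfolding l_covering_map_def by blast
lemma sFr: "simplicial_complex (Fr r)" using fc_sc[OF link_sc[OF sX]] .
lemma Fr_iff: "S \<in> Fr r \<longleftrightarrow> S \<in> F \<and> \<Union>S \<inter> r = {} \<and> \<Union>S \<union> r \<in> X"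
  using fc_link_iff[OF sX] .
lemma Fr_sub: "Fr r \<subseteq> F" using Fr_iff by blast
lemma vF: "t \<in> vertices F \<longleftrightarrow> t \<in> X \<and> card t = d1 + 1"
  by (simp add: vert_fc faces_of_dim_iff)
lemma vFr: "t \<in> vertices (Fr r) \<longleftrightarrow> t \<in> X \<and> card t = d1 + 1 \<and> t \<inter> r = {} \<and> t \<union> r \<in> X"
proof -
  have "t \<in> vertices (Fr r) \<longleftrightarrow> {t} \<in> Fr r" by (simp add: vert_iff)
  also have "\<dots> \<longleftrightarrow> {t} \<in> F \<and> t \<inter> r = {} \<and> t \<union> r \<in> X" using Fr_iff by simp
  also have "{t} \<in> F \<longleftrightarrow> t \<in> vertices F" by (simp add: vert_iff)
  finally show ?thesis using vF by blast
qed
lemma covr: "l_covering_map l fst (Zr r) (Fr r)"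
  unfolding Zr_def by (rule restr_cov[OF cov Fr_sub sFr])
lemma sZr: "simplicial_complex (Zr r)" using covr unfolding l_covering_map_def by blast
lemma vZr: "z \<in> vertices (Zr r) \<longleftrightarrow> z \<in> vertices Z \<and> fst z \<in> vertices (Fr r)"
  unfolding Zr_def vertices_def by auto
lemma vZ': "z \<in> vertices Z \<longleftrightarrow> fst z \<in> vertices F \<and> snd z < l"
  using vZ vert_fc[of d1 X] by (cases z) auto
lemma Z_fin: "\<sigma> \<in> Z \<Longrightarrow> finite \<sigma>" using sc_fin[OF sZ] .

lemma room:
  assumes "\<sigma> \<in> X" "card \<sigma> + k \<le> d + 1"
  shows "\<exists>t. card t = k \<and> t \<inter> \<sigma> = {} \<and> t \<union> \<sigma> \<in> X"
proof -
  obtain T where T: "T \<in> X" "\<sigma> \<subseteq> T" "card T = d + 1"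
    using pure assms(1) unfolding pure_complex_def by blast
  have fT: "finite T" using sc_fin[OF sX T(1)] .
  have "card (T - \<sigma>) = d + 1 - card \<sigma>" using T fT by (simp add: card_Diff_subset finite_subset)
  then have "k \<le> card (T - \<sigma>)" using assms(2) by simp
  then obtain t where t: "t \<subseteq> T - \<sigma>" "card t = k" by (meson obtain_subset_with_card_n)
  have "t \<union> \<sigma> \<subseteq> T" using t T by blast
  then have "t \<union> \<sigma> \<in> X" using sc_sub[OF sX T(1)] by simp
  then show ?thesis using t by blast
qed

lemma vert_X_in: "v \<in> vertices X \<Longrightarrow> {v} \<in> X" by (simp add: vert_iff)

lemma sc_Fv:
  assumes v: "v \<in> vertices X"
  shows "simply_connected (Fr {v})"
proof -
  have "{v} \<in> X" "card {v} \<le> d1 + 1" "card {v} = 1" using v by (auto simp: vert_iff)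
  then show ?thesis using wc unfolding well_connected_def by blast
qed

lemma comp_iso:
  assumes v: "v \<in> vertices X" and z: "z \<in> vertices (Zr {v})"
  shows "simplicial_iso fst {\<sigma>\<in>Zr {v}. \<sigma> \<subseteq> {u \<in> vertices (Zr {v}). (z,u) \<in> conn {v}}} (Fr {v})"
proof -
  have "{u \<in> vertices (Zr {v}). (z,u) \<in> conn {v}} \<in> components (Zr {v})"
    unfolding components_def conn_def using z by blast
  then show ?thesis using sc_Fv[OF v] covr[of "{v}"] unfolding simply_connected_def by blast
qed

lemma comp_vert: "vertices {\<sigma>\<in>A. \<sigma> \<subseteq> C} = C" if "C \<subseteq> vertices A" for A C
  using that unfolding vertices_def by auto

lemma lift_uniq:
  assumes v: "v \<in> vertices X" and z: "z \<in> vertices (Zr {v})" and s: "s \<in> vertices (Fr {v})"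
  shows "\<exists>!u. u \<in> vertices (Zr {v}) \<and> (z,u) \<in> conn {v} \<and> fst u = s"
proof -
  let ?C = "{u \<in> vertices (Zr {v}). (z,u) \<in> conn {v}}"
  have "bij_betw fst (vertices {\<sigma>\<in>Zr {v}. \<sigma> \<subseteq> ?C}) (vertices (Fr {v}))"
    using iso_bij[OF comp_iso[OF v z]] .
  then have b: "bij_betw fst ?C (vertices (Fr {v}))" using comp_vert[of ?C "Zr {v}"] by simp
  have "s \<in> fst ` ?C" using s b unfolding bij_betw_def by simp
  then obtain u where "u \<in> ?C" "fst u = s" by (rule imageE) simp
  moreover have "u' = u" if "u' \<in> ?C" "fst u' = s" for u'
  proof -
    have "inj_on fst ?C" using b unfolding bij_betw_def by simp
    then show ?thesis using that \<open>u \<in> ?C\<close> \<open>fst u = s\<close> by (metis (no_types, lifting) inj_onD)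
  qed
  ultimately show ?thesis by blast
qed

lemma lift_edge:
  assumes v: "v \<in> vertices X" and z: "z \<in> vertices (Zr {v})"
    and u: "u \<in> vertices (Zr {v})" "(z,u) \<in> conn {v}"
    and u': "u' \<in> vertices (Zr {v})" "(z,u') \<in> conn {v}"
    and e: "{fst u, fst u'} \<in> Fr {v}"
  shows "{u,u'} \<in> Z"
proof -
  let ?C = "{u \<in> vertices (Zr {v}). (z,u) \<in> conn {v}}"
  have sub: "{u,u'} \<subseteq> vertices {\<sigma>\<in>Zr {v}. \<sigma> \<subseteq> ?C}" using comp_vert[of ?C "Zr {v}"] u u' by auto
  have "{u,u'} \<in> {\<sigma>\<in>Zr {v}. \<sigma> \<subseteq> ?C}" using iso_face[OF comp_iso[OF v z] sub] e by simp
  then show ?thesis unfolding Zr_def by blast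
qed

lemma conn_sym: "(a,b) \<in> conn r \<Longrightarrow> (b,a) \<in> conn r"
  unfolding conn_def by (rule edge_sym)
lemma conn_trans: "(a,b) \<in> conn r \<Longrightarrow> (b,c) \<in> conn r \<Longrightarrow> (a,c) \<in> conn r"
  unfolding conn_def by (rule rtrancl_trans)
lemma conn_edge: "{a,b} \<in> Zr r \<Longrightarrow> (a,b) \<in> conn r"
  unfolding conn_def by (rule r_into_rtrancl) (simp add: edge_rel_def)
lemma conn_refl: "(a,a) \<in> conn r"
  unfolding conn_def by simp
lemma conn_vert: "(a,b) \<in> conn r \<Longrightarrow> a \<in> vertices (Zr r) \<Longrightarrow> b \<in> vertices (Zr r)"
  unfolding conn_def using edge_vert[OF sZr] by blast

end



context setting begin

lemma Xsub: "A \<in> X \<Longrightarrow> B \<subseteq> A \<Longrightarrow> B \<in> X" using sc_sub[OF sX] by blast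
lemma Zsub: "A \<in> Z \<Longrightarrow> B \<subseteq> A \<Longrightarrow> B \<in> Z" using sc_sub[OF sZ] by blast

lemma F_iff: "S \<in> F \<longleftrightarrow> finite S \<and> (\<forall>s\<in>S. s \<in> X \<and> card s = d1+1) \<and> (\<forall>s\<in>S. \<forall>t\<in>S. s \<noteq> t \<longrightarrow> s \<inter> t = {}) \<and> \<Union>S \<in> X"
  unfolding faces_complex_def faces_of_dim_def by blast

lemma F_pair: assumes "card a = d1+1" "card b = d1+1" "a \<inter> b = {}" "a \<union> b \<in> X"
  shows "{a,b} \<in> F"
proof -
  have "a \<in> X" "b \<in> X" using Xsub[OF assms(4)] by auto
  then show ?thesis unfolding F_iff using assms by auto
qed

lemma F_triple: assumes "card a = d1+1" "card b = d1+1" "card c = d1+1"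
  "a \<inter> b = {}" "a \<inter> c = {}" "b \<inter> c = {}" "a \<union> b \<union> c \<in> X"
  shows "{a,b,c} \<in> F"
proof -
  have "a \<in> X" "b \<in> X" "c \<in> X" using Xsub[OF assms(7)] by auto
  moreover have "\<Union>{a,b,c} = a \<union> b \<union> c" by auto
  ultimately show ?thesis unfolding F_iff using assms by auto
qed

lemma Fr_pairI: assumes "{a,b} \<in> F" "(a \<union> b) \<inter> r = {}" "a \<union> b \<union> r \<in> X"
  shows "{a,b} \<in> Fr r"
  using assms Fr_iff by simp

lemma Fr_mono: assumes "S \<in> Fr r" "r' \<subseteq> r" shows "S \<in> Fr r'"
proof -
  have "S \<in> F" "\<Union>S \<inter> r = {}" "\<Union>S \<union> r \<in> X" using assms(1) Fr_iff by auto
  moreover have "\<Union>S \<union> r' \<subseteq> \<Union>S \<union> r" using assms(2) by blast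
  ultimately have "\<Union>S \<union> r' \<in> X" using Xsub by blast
  moreover have "\<Union>S \<inter> r' = {}" using \<open>\<Union>S \<inter> r = {}\<close> assms(2) by blast
  ultimately show ?thesis using Fr_iff \<open>S \<in> F\<close> by blast
qed

lemma lift: assumes "S \<in> F" "z \<in> vertices Z" "fst z \<in> S"
  shows "\<exists>\<sigma>\<in>Z. z \<in> \<sigma> \<and> fst ` \<sigma> = S"
  using cov_lift[OF cZ sZ sF assms] .

lemma adj_inj: "{z,a} \<in> Z \<Longrightarrow> {z,b} \<in> Z \<Longrightarrow> fst a = fst b \<Longrightarrow> a = b"
  using cov_adj_inj[OF cZ sZ] by blast

lemma adj: assumes "{z,a} \<in> Z" "a \<noteq> z" shows "fst a \<noteq> fst z" "{fst z, fst a} \<in> F"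
  using cov_adj[OF cZ sZ assms] by auto

lemma vZ_of: "{z,a} \<in> Z \<Longrightarrow> a \<in> vertices Z"
  using Zsub[of "{z,a}" "{a}"] by (simp add: vert_iff)

lemma vZ_card: "y \<in> vertices Z \<Longrightarrow> card (fst y) = d1 + 1 \<and> fst y \<in> X"
  using vZ' vF by blast

definition rv :: "'a \<Rightarrow> 'a set" where "rv v = (SOME t. t \<in> vertices (Fr {v}))"

lemma rv: assumes v: "v \<in> vertices X" shows "rv v \<in> vertices (Fr {v})"
proof -
  have "{v} \<in> X" using v by (simp add: vert_iff)
  moreover have "card {v} + (d1+1) \<le> d + 1" using dim by simp
  ultimately obtain t where t: "card t = d1+1" "t \<inter> {v} = {}" "t \<union> {v} \<in> X" using room by blast
  then have "t \<in> X" using Xsub by blast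
  then have "t \<in> vertices (Fr {v})" using t vFr by blast
  then show ?thesis unfolding rv_def by (rule someI)
qed

lemma rv_Z: assumes "v \<in> vertices X" "i < l" shows "(rv v, i) \<in> vertices (Zr {v})"
  using rv[OF assms(1)] assms(2) vZr vZ' vFr vF by auto

lemma idx: assumes v: "v \<in> vertices X" and y: "y \<in> vertices (Zr {v})"
  shows "\<exists>!i. i < l \<and> (y, (rv v, i)) \<in> conn {v}"
proof -
  obtain u where u: "u \<in> vertices (Zr {v})" "(y,u) \<in> conn {v}" "fst u = rv v"
    and uq: "\<And>u'. u' \<in> vertices (Zr {v}) \<Longrightarrow> (y,u') \<in> conn {v} \<Longrightarrow> fst u' = rv v \<Longrightarrow> u' = u"
    using lift_uniq[OF v y rv[OF v]] by metis
  have "snd u < l" using u(1) vZr vZ' by blast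
  then have ex: "snd u < l \<and> (y, (rv v, snd u)) \<in> conn {v}" using u by (metis prod.collapse)
  show ?thesis
  proof (rule ex1I[of _ "snd u"])
    show "snd u < l \<and> (y, (rv v, snd u)) \<in> conn {v}" using ex .
    fix i assume i: "i < l \<and> (y, (rv v, i)) \<in> conn {v}"
    then have "(rv v, i) = u" using uq[of "(rv v, i)"] rv_Z[OF v] by simp
    then show "i = snd u" by auto
  qed
qed

lemma vZv: assumes "y \<in> vertices Z" "fst y \<inter> r = {}" "fst y \<union> r \<in> X"
  shows "y \<in> vertices (Zr r)"
  using assms vZr vFr vZ_card by blast

lemma wc_conn: "r \<in> X \<Longrightarrow> card r \<le> d1+1 \<Longrightarrow> connected_complex (Fr r)"
  using wc unfolding well_connected_def by blast

lemma img_obtain: "fst ` \<sigma> = S \<Longrightarrow> s \<in> S \<Longrightarrow> \<exists>u\<in>\<sigma>. fst u = s"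
  by blast

lemma key2:
  assumes z: "z \<in> vertices Z" and v: "v \<in> fst z"
    and y: "{z,y} \<in> Z" "fst y \<inter> fst z = {}" "fst y \<union> fst z \<in> X"
    and y': "{z,y'} \<in> Z" "fst y' \<inter> fst z = {}" "fst y' \<union> fst z \<in> X"
  shows "(y,y') \<in> conn {v}"
proof -
  let ?s = "fst z"
  have sX': "?s \<in> X" "card ?s = d1 + 1" using vZ_card[OF z] by auto
  then have "connected_complex (Fr ?s)" using wc_conn by simp
  moreover have "fst y \<in> vertices (Fr ?s)" "fst y' \<in> vertices (Fr ?s)"
    using vFr vZ_card[OF vZ_of[OF y(1)]] vZ_card[OF vZ_of[OF y'(1)]] y y' by auto
  ultimately have path: "(fst y, fst y') \<in> (edge_rel (Fr ?s))\<^sup>*" unfolding connected_complex_def by blast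
  have "\<forall>u. {z,u} \<in> Z \<and> fst u = t \<longrightarrow> (y,u) \<in> conn {v}" if "(fst y, t) \<in> (edge_rel (Fr ?s))\<^sup>*" for t
    using that
  proof (induction rule: rtrancl_induct)
    case base
    show ?case
    proof (intro allI impI)
      fix u assume "{z,u} \<in> Z \<and> fst u = fst y"
      then have "u = y" using adj_inj[OF _ y(1)] by blast
      then show "(y,u) \<in> conn {v}" using conn_refl by simp
    qed
  next
    case (step t t')
    have tt: "{t,t'} \<in> Fr ?s" using step(2) by (simp add: edge_rel_def)
    then have tF: "{t,t'} \<in> F" and tt1: "(t \<union> t') \<inter> ?s = {}" and tt2: "t \<union> t' \<union> ?s \<in> X"
      using Fr_iff[of "{t,t'}" ?s] by auto
    have ct: "card t = d1+1" "card t' = d1+1" using tF unfolding F_iff by auto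
    have d1: "?s \<inter> t = {}" using tt1 by blast
    have d2: "?s \<union> t \<in> X" using Xsub[OF tt2, of "?s \<union> t"] by blast
    have "{?s, t} \<in> F" using F_pair[OF sX'(2) ct(1) d1 d2] .
    then obtain \<sigma> where \<sigma>: "\<sigma> \<in> Z" "z \<in> \<sigma>" "fst ` \<sigma> = {?s, t}" using lift[OF _ z] by blast
    then obtain u where u: "u \<in> \<sigma>" "fst u = t" using img_obtain[OF \<sigma>(3), of t] by blast
    have "{z,u} \<subseteq> \<sigma>" using \<sigma>(2) u(1) by blast
    then have zu: "{z,u} \<in> Z" using Zsub[OF \<sigma>(1)] by simp
    have IH: "(y,u) \<in> conn {v}" using step(3) zu u(2) by blast
    show ?case
    proof (intro allI impI)
      fix u' assume u': "{z,u'} \<in> Z \<and> fst u' = t'"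
      show "(y,u') \<in> conn {v}"
      proof (cases "t = t'")
        case True
        then have "u' = u" using adj_inj[OF _ zu, of u'] u' u(2) by simp
        then show ?thesis using IH by simp
      next
        case False
        have d3: "t \<inter> t' = {}" using tF False unfolding F_iff by auto
        have d4: "?s \<inter> t' = {}" using tt1 by blast
        have d5: "?s \<union> t \<union> t' \<in> X" using tt2 by (simp add: Un_ac)
        have "{?s, t, t'} \<in> F" using F_triple[OF sX'(2) ct d1 d4 d3 d5] .
        then obtain \<sigma>' where \<sigma>': "\<sigma>' \<in> Z" "z \<in> \<sigma>'" "fst ` \<sigma>' = {?s, t, t'}" using lift[OF _ z] by blast
        obtain a where a: "a \<in> \<sigma>'" "fst a = t" using img_obtain[OF \<sigma>'(3), of t] by blast
        obtain b where b: "b \<in> \<sigma>'" "fst b = t'" using img_obtain[OF \<sigma>'(3), of t'] by blast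
        have "{z,a} \<subseteq> \<sigma>'" "{z,b} \<subseteq> \<sigma>'" "{a,b} \<subseteq> \<sigma>'" using \<sigma>'(2) a(1) b(1) by auto
        then have za: "{z,a} \<in> Z" and zb: "{z,b} \<in> Z" and ab': "{a,b} \<in> Z" using Zsub[OF \<sigma>'(1)] by auto
        have "a = u" using adj_inj[OF za zu] a(2) u(2) by simp
        moreover have "b = u'" using adj_inj[OF zb] u' b(2) by simp
        ultimately have "{u,u'} \<in> Z" using ab' by simp
        moreover have "{t,t'} \<in> Fr {v}"
        proof (rule Fr_pairI[OF tF])
          show "(t \<union> t') \<inter> {v} = {}" using tt1 v by blast
          have "t \<union> t' \<union> {v} \<subseteq> t \<union> t' \<union> ?s" using v by blast
          then show "t \<union> t' \<union> {v} \<in> X" using Xsub[OF tt2] by simp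
        qed
        moreover have "fst ` {u,u'} = {t,t'}" using u(2) u' by simp
        ultimately have "{u,u'} \<in> Zr {v}" unfolding Zr_def by simp
        then have "(u,u') \<in> conn {v}" by (rule conn_edge)
        then show ?thesis using conn_trans[OF IH] by blast
      qed
    qed
  qed
  then show ?thesis using path y' by blast
qed

end



context setting begin

lemma key1:
  assumes vw: "v \<noteq> w"
    and y: "y \<in> vertices Z" "fst y \<inter> {v,w} = {}" "fst y \<union> {v,w} \<in> X"
    and y': "y' \<in> vertices Z" "fst y' \<inter> {v,w} = {}" "fst y' \<union> {v,w} \<in> X"
    and c: "(y,y') \<in> conn {v}"
  shows "(y,y') \<in> conn {w}"
proof -
  have vwX: "{v,w} \<in> X" using Xsub[OF y(3)] by simp
  have vX: "v \<in> vertices X" and wX: "w \<in> vertices X" using Xsub[OF vwX] by (auto simp: vert_iff)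
  have sub1: "A \<union> {v} \<subseteq> A \<union> {v,w}" "A \<union> {w} \<subseteq> A \<union> {v,w}" for A by auto
  have yv: "y \<in> vertices (Zr {v})" using vZv[OF y(1), of "{v}"] y(2) Xsub[OF y(3) sub1(1)] by auto
  have y'v: "y' \<in> vertices (Zr {v})" using vZv[OF y'(1), of "{v}"] y'(2) Xsub[OF y'(3) sub1(1)] by auto
  have yw: "y \<in> vertices (Zr {w})" using vZv[OF y(1), of "{w}"] y(2) Xsub[OF y(3) sub1(2)] by auto
  have y'w: "y' \<in> vertices (Zr {w})" using vZv[OF y'(1), of "{w}"] y'(2) Xsub[OF y'(3) sub1(2)] by auto
  show ?thesis
  proof (cases "d1 = 0")
    case False
    have "card {v,w} \<le> d1 + 1" using vw False by simp
    then have "connected_complex (Fr {v,w})" using wc_conn vwX by simp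
    moreover have "fst y \<in> vertices (Fr {v,w})" "fst y' \<in> vertices (Fr {v,w})"
      using vFr vZ_card[OF y(1)] vZ_card[OF y'(1)] y y' by auto
    ultimately have path: "(fst y, fst y') \<in> (edge_rel (Fr {v,w}))\<^sup>*" unfolding connected_complex_def by blast
    have "\<forall>u. u \<in> vertices (Zr {v}) \<and> (y,u) \<in> conn {v} \<and> fst u = t \<longrightarrow> (y,u) \<in> conn {w}"
      if "(fst y, t) \<in> (edge_rel (Fr {v,w}))\<^sup>*" for t
      using that
    proof (induction rule: rtrancl_induct)
      case base
      show ?case
      proof (intro allI impI)
        fix u assume u: "u \<in> vertices (Zr {v}) \<and> (y,u) \<in> conn {v} \<and> fst u = fst y"
        have "u = y" using lift_uniq[OF vX yv, of "fst y"] u conn_refl[of y "{v}"] yv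
          vZr by blast
        then show "(y,u) \<in> conn {w}" using conn_refl by simp
      qed
    next
      case (step t t')
      have tt: "{t,t'} \<in> Fr {v,w}" using step(2) by (simp add: edge_rel_def)
      have "{t} \<subseteq> {t,t'}" by blast
      then have "{t} \<in> Fr {v,w}" using sc_sub[OF sFr tt] by simp
      then have "t \<in> vertices (Fr {v,w})" by (simp add: vert_iff)
      then have tX: "t \<in> X" "card t = d1+1" "t \<inter> {v,w} = {}" "t \<union> {v,w} \<in> X" using vFr[of t "{v,w}"] by auto
      then have "t \<union> {v} \<in> X" using Xsub[OF tX(4) sub1(1)] by simp
      then have tv: "t \<in> vertices (Fr {v})" using vFr[of t "{v}"] tX by auto
      obtain u where u: "u \<in> vertices (Zr {v})" "(y,u) \<in> conn {v}" "fst u = t"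
        using lift_uniq[OF vX yv tv] by blast
      have IH: "(y,u) \<in> conn {w}" using step(3) u by blast
      have ttv: "{t,t'} \<in> Fr {v}" using Fr_mono[OF tt] by blast
      have ttw: "{t,t'} \<in> Fr {w}" using Fr_mono[OF tt] by blast
      show ?case
      proof (intro allI impI)
        fix u' assume u': "u' \<in> vertices (Zr {v}) \<and> (y,u') \<in> conn {v} \<and> fst u' = t'"
        have "{u,u'} \<in> Z" using lift_edge[OF vX yv u(1,2)] u' u(3) ttv by simp
        moreover have "fst ` {u,u'} = {t,t'}" using u(3) u' by simp
        ultimately have "{u,u'} \<in> Zr {w}" unfolding Zr_def using ttw by simp
        then have "(u,u') \<in> conn {w}" by (rule conn_edge)
        then show "(y,u') \<in> conn {w}" using conn_trans[OF IH] by blast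
      qed
    qed
    then show ?thesis using path y'v c by blast
  next
    case True
    obtain p where p: "fst y = {p}" using vZ_card[OF y(1)] True card_1_singletonE by auto
    obtain p' where p': "fst y' = {p'}" using vZ_card[OF y'(1)] True card_1_singletonE by auto
    have pX: "{p} \<in> X" "{p'} \<in> X" using vZ_card[OF y(1)] vZ_card[OF y'(1)] p p' by auto
    have pvw: "p \<noteq> v" "p \<noteq> w" "p' \<noteq> v" "p' \<noteq> w" using y(2) y'(2) p p' by auto
    have "{p} \<union> {v,w} = {p,v,w}" "{p'} \<union> {v,w} = {p',v,w}" by auto
    then have T: "{p,v,w} \<in> X" "{p',v,w} \<in> X" using y(3) y'(3) p p' by metis+
    have wv: "{w} \<in> vertices (Fr {v})" using vFr[of "{w}" "{v}"] True vw Xsub[OF vwX] by auto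
    obtain wt where wt: "wt \<in> vertices (Zr {v})" "(y,wt) \<in> conn {v}" "fst wt = {w}"
      using lift_uniq[OF vX yv wv] by blast
    have pw: "{{p},{w}} \<in> Fr {v}"
    proof (rule Fr_pairI)
      show "{{p},{w}} \<in> F" using F_pair[of "{p}" "{w}"] True pvw Xsub[OF T(1), of "{w,p}"] by auto
      show "({p} \<union> {w}) \<inter> {v} = {}" using pvw vw by auto
      show "{p} \<union> {w} \<union> {v} \<in> X" using T(1) by (simp add: insert_commute)
    qed
    have p'w: "{{p'},{w}} \<in> Fr {v}"
    proof (rule Fr_pairI)
      show "{{p'},{w}} \<in> F" using F_pair[of "{p'}" "{w}"] True pvw Xsub[OF T(2), of "{w,p'}"] by auto
      show "({p'} \<union> {w}) \<inter> {v} = {}" using pvw vw by auto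
      show "{p'} \<union> {w} \<union> {v} \<in> X" using T(2) by (simp add: insert_commute)
    qed
    have ywt: "{y,wt} \<in> Z" using lift_edge[OF vX yv yv conn_refl wt(1,2)] p wt(3) pw by simp
    have cy'wt: "(y',wt) \<in> conn {v}" using conn_trans[OF conn_sym[OF c] wt(2)] .
    have y'wt: "{y',wt} \<in> Z" using lift_edge[OF vX y'v y'v conn_refl wt(1) cy'wt] p' wt(3) p'w by simp
    have tri: "{{q},{v},{w}} \<in> F" if "q \<noteq> v" "q \<noteq> w" "{q,v,w} \<in> X" for q
      using F_triple[of "{q}" "{v}" "{w}"] True that vw by (auto simp: insert_commute)
    have lv: "\<exists>vt. {wt,vt} \<in> Z \<and> {yy,vt} \<in> Z \<and> fst vt = {v}"
      if yy: "yy \<in> vertices Z" "fst yy = {q}" "q \<noteq> v" "q \<noteq> w" "{q,v,w} \<in> X" "{yy,wt} \<in> Z" for yy q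
    proof -
      obtain \<sigma> where \<sigma>: "\<sigma> \<in> Z" "yy \<in> \<sigma>" "fst ` \<sigma> = {{q},{v},{w}}"
        using lift[OF tri[OF yy(3,4,5)] yy(1)] yy(2) by auto
      obtain a where a: "a \<in> \<sigma>" "fst a = {v}" using img_obtain[OF \<sigma>(3), of "{v}"] by blast
      obtain b where b: "b \<in> \<sigma>" "fst b = {w}" using img_obtain[OF \<sigma>(3), of "{w}"] by blast
      have "{yy,b} \<subseteq> \<sigma>" "{b,a} \<subseteq> \<sigma>" "{yy,a} \<subseteq> \<sigma>" using a b \<sigma>(2) by auto
      then have yb: "{yy,b} \<in> Z" and ba: "{b,a} \<in> Z" and ya: "{yy,a} \<in> Z" using Zsub[OF \<sigma>(1)] by auto
      have "b = wt" using adj_inj[OF yb yy(6)] b(2) wt(3) by simp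
      then show ?thesis using ba ya a(2) by blast
    qed
    obtain vt where vt: "{wt,vt} \<in> Z" "{y,vt} \<in> Z" "fst vt = {v}"
      using lv[OF y(1) p pvw(1,2) T(1) ywt] by blast
    obtain vt' where vt': "{wt,vt'} \<in> Z" "{y',vt'} \<in> Z" "fst vt' = {v}"
      using lv[OF y'(1) p' pvw(3,4) T(2) y'wt] by blast
    have "vt' = vt" using adj_inj[OF vt'(1) vt(1)] vt(3) vt'(3) by simp
    have pvF: "{{p},{v}} \<in> Fr {w}"
    proof (rule Fr_pairI)
      show "{{p},{v}} \<in> F" using F_pair[of "{p}" "{v}"] True pvw Xsub[OF T(1), of "{v,p}"] by auto
      show "({p} \<union> {v}) \<inter> {w} = {}" using pvw vw by auto
      show "{p} \<union> {v} \<union> {w} \<in> X" using T(1) by (simp add: insert_commute)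
    qed
    have p'vF: "{{p'},{v}} \<in> Fr {w}"
    proof (rule Fr_pairI)
      show "{{p'},{v}} \<in> F" using F_pair[of "{p'}" "{v}"] True pvw Xsub[OF T(2), of "{v,p'}"] by auto
      show "({p'} \<union> {v}) \<inter> {w} = {}" using pvw vw by auto
      show "{p'} \<union> {v} \<union> {w} \<in> X" using T(2) by (simp add: insert_commute)
    qed
    have "{y,vt} \<in> Zr {w}" unfolding Zr_def using vt(2) p vt(3) pvF by simp
    then have c1: "(y,vt) \<in> conn {w}" by (rule conn_edge)
    have "{y',vt} \<in> Zr {w}" unfolding Zr_def using vt'(2) \<open>vt' = vt\<close> p' vt(3) p'vF by simp
    then have c2: "(vt,y') \<in> conn {w}" using conn_sym conn_edge by blast
    show ?thesis using conn_trans[OF c1 c2] .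
  qed
qed

end



context setting begin

definition E :: "'a \<times> nat \<Rightarrow> 'a \<times> nat \<Rightarrow> bool" where
  "E a b \<longleftrightarrow> fst a \<noteq> fst b \<and> {fst a, fst b} \<in> X \<and> snd a < l \<and> snd b < l \<and>
     (\<exists>y\<in>vertices Z. fst y \<inter> {fst a, fst b} = {} \<and> fst y \<union> {fst a, fst b} \<in> X \<and>
        (y, (rv (fst a), snd a)) \<in> conn {fst a} \<and> (y, (rv (fst b), snd b)) \<in> conn {fst b})"

lemma E_sym: "E a b \<Longrightarrow> E b a"
  unfolding E_def by (auto simp: insert_commute)

lemma E_basic: assumes "E (v,i) (w,j)"
  shows "v \<noteq> w" "{v,w} \<in> X" "i < l" "j < l" "v \<in> vertices X" "w \<in> vertices X"
proof -
  show "v \<noteq> w" "{v,w} \<in> X" "i < l" "j < l" using assms unfolding E_def by auto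
  then show "v \<in> vertices X" "w \<in> vertices X" using Xsub[of "{v,w}"] by (auto simp: vert_iff)
qed

lemma E_wit: assumes "E (v,i) (w,j)"
  obtains y where "y \<in> vertices Z" "fst y \<inter> {v,w} = {}" "fst y \<union> {v,w} \<in> X"
    "(y, (rv v, i)) \<in> conn {v}" "(y, (rv w, j)) \<in> conn {w}"
  using assms unfolding E_def by auto

lemma E_intro: assumes "v \<noteq> w" "{v,w} \<in> X" "i < l" "j < l"
  "y \<in> vertices Z" "fst y \<inter> {v,w} = {}" "fst y \<union> {v,w} \<in> X"
  "(y, (rv v, i)) \<in> conn {v}" "(y, (rv w, j)) \<in> conn {w}"
  shows "E (v,i) (w,j)"
  using assms unfolding E_def by auto

lemma vZv2: assumes "y \<in> vertices Z" "fst y \<inter> {v,w} = {}" "fst y \<union> {v,w} \<in> X"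
  shows "y \<in> vertices (Zr {v})" "y \<in> vertices (Zr {w})"
proof -
  have sub1: "A \<union> {v} \<subseteq> A \<union> {v,w}" "A \<union> {w} \<subseteq> A \<union> {v,w}" for A by auto
  show "y \<in> vertices (Zr {v})" using vZv[OF assms(1), of "{v}"] assms(2) Xsub[OF assms(3) sub1(1)] by auto
  show "y \<in> vertices (Zr {w})" using vZv[OF assms(1), of "{w}"] assms(2) Xsub[OF assms(3) sub1(2)] by auto
qed

lemma LU: assumes e1: "E (v,i) (w,j)" and e2: "E (v,i) (w,j')" shows "j = j'"
proof -
  obtain y1 where y1: "y1 \<in> vertices Z" "fst y1 \<inter> {v,w} = {}" "fst y1 \<union> {v,w} \<in> X"
    "(y1, (rv v, i)) \<in> conn {v}" "(y1, (rv w, j)) \<in> conn {w}" using E_wit[OF e1] by blast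
  obtain y2 where y2: "y2 \<in> vertices Z" "fst y2 \<inter> {v,w} = {}" "fst y2 \<union> {v,w} \<in> X"
    "(y2, (rv v, i)) \<in> conn {v}" "(y2, (rv w, j')) \<in> conn {w}" using E_wit[OF e2] by blast
  have "(y1,y2) \<in> conn {v}" using conn_trans[OF y1(4) conn_sym[OF y2(4)]] .
  then have c: "(y1,y2) \<in> conn {w}" using key1[OF E_basic(1)[OF e1] y1(1,2,3) y2(1,2,3)] by blast
  have a: "(y2, (rv w, j)) \<in> conn {w}" using conn_trans[OF conn_sym[OF c] y1(5)] .
  have "\<exists>!k. k < l \<and> (y2, (rv w, k)) \<in> conn {w}" using idx[OF E_basic(6)[OF e1] vZv2(2)[OF y2(1,2,3)]] .
  then show ?thesis using a y2(5) E_basic(4)[OF e1] E_basic(4)[OF e2] by blast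
qed

lemma LE': assumes e: "E (v,i) (w,j)" and y: "y \<in> vertices Z" "fst y \<inter> {v,w} = {}" "fst y \<union> {v,w} \<in> X"
  and c: "(y, (rv v, i)) \<in> conn {v}"
  shows "(y, (rv w, j)) \<in> conn {w}"
proof -
  obtain j' where j': "j' < l" "(y, (rv w, j')) \<in> conn {w}"
    using idx[OF E_basic(6)[OF e] vZv2(2)[OF y]] by blast
  have "E (v,i) (w,j')" using E_intro[OF E_basic(1,2,3)[OF e] j'(1) y c j'(2)] .
  then have "j = j'" using LU[OF e] by blast
  then show ?thesis using j' by simp
qed

lemma LE: assumes vw: "v \<noteq> w" "{v,w} \<in> X" and i: "i < l"
  shows "\<exists>j. E (v,i) (w,j)"
proof -
  have vX: "v \<in> vertices X" using Xsub[OF vw(2), of "{v}"] by (simp add: vert_iff)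
  have "card {v,w} + (d1+1) \<le> d + 1" using vw dim by simp
  then obtain t where t: "card t = d1+1" "t \<inter> {v,w} = {}" "t \<union> {v,w} \<in> X" using room[OF vw(2)] by blast
  have tX: "t \<in> X" using Xsub[OF t(3), of t] by blast
  have "t \<union> {v} \<in> X" using Xsub[OF t(3), of "t \<union> {v}"] by blast
  then have tv: "t \<in> vertices (Fr {v})" using vFr t tX by auto
  obtain y where y: "y \<in> vertices (Zr {v})" "((rv v, i), y) \<in> conn {v}" "fst y = t"
    using lift_uniq[OF vX rv_Z[OF vX i] tv] by blast
  have yZ: "y \<in> vertices Z" using y(1) vZr by blast
  have wX: "w \<in> vertices X" using Xsub[OF vw(2), of "{w}"] by (simp add: vert_iff)
  obtain j where j: "j < l" "(y, (rv w, j)) \<in> conn {w}"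
    using idx[OF wX vZv2(2)[OF yZ]] t y(3) by blast
  have "E (v,i) (w,j)" using E_intro[OF vw i j(1) yZ] t y(3) conn_sym[OF y(2)] j(2) by simp
  then show ?thesis by blast
qed

lemma tri: assumes e1: "E (v,i) (w,j)" and e2: "E (v,i) (w',j')" and ww: "w \<noteq> w'" and T: "{v,w,w'} \<in> X"
  shows "E (w,j) (w',j')"
proof -
  have vX: "v \<in> vertices X" using E_basic[OF e1] by simp
  have i: "i < l" using E_basic[OF e1] by simp
  have vw: "v \<noteq> w" "v \<noteq> w'" using E_basic(1)[OF e1] E_basic(1)[OF e2] by auto
  have ww': "{w,w'} \<in> X" using Xsub[OF T, of "{w,w'}"] by auto
  show ?thesis
  proof (cases "d1 = 0")
    case False
    have "card {v,w,w'} + (d1+1) \<le> d + 1" using vw ww dim False by (simp add: card_insert_if)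
    then obtain t where t: "card t = d1+1" "t \<inter> {v,w,w'} = {}" "t \<union> {v,w,w'} \<in> X" using room[OF T] by blast
    have tX: "t \<in> X" using Xsub[OF t(3), of t] by blast
    have "t \<union> {v} \<in> X" using Xsub[OF t(3), of "t \<union> {v}"] by blast
    then have tv: "t \<in> vertices (Fr {v})" using vFr t tX by auto
    obtain y where y: "y \<in> vertices (Zr {v})" "((rv v, i), y) \<in> conn {v}" "fst y = t"
      using lift_uniq[OF vX rv_Z[OF vX i] tv] by blast
    have yZ: "y \<in> vertices Z" using y(1) vZr by blast
    have s1: "t \<union> {v,w} \<subseteq> t \<union> {v,w,w'}" "t \<union> {v,w'} \<subseteq> t \<union> {v,w,w'}" "t \<union> {w,w'} \<subseteq> t \<union> {v,w,w'}" by auto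
    have c1: "(y, (rv w, j)) \<in> conn {w}"
      using LE'[OF e1 yZ] y(3) t(2) Xsub[OF t(3) s1(1)] conn_sym[OF y(2)] by auto
    have c2: "(y, (rv w', j')) \<in> conn {w'}"
      using LE'[OF e2 yZ] y(3) t(2) Xsub[OF t(3) s1(2)] conn_sym[OF y(2)] by auto
    show ?thesis using E_intro[OF ww ww' E_basic(4)[OF e1] E_basic(4)[OF e2] yZ] y(3) t(2)
        Xsub[OF t(3) s1(3)] c1 c2 by auto
  next
    case True
    have Tw: "{w'} \<in> vertices (Fr {v})" using vFr[of "{w'}" "{v}"] True vw Xsub[OF T, of "{w'}"] Xsub[OF T, of "{w',v}"] by (auto simp: insert_commute)
    have Tw2: "{w} \<in> vertices (Fr {v})" using vFr[of "{w}" "{v}"] True vw Xsub[OF T, of "{w}"] Xsub[OF T, of "{w,v}"] by (auto simp: insert_commute)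
    obtain y where y: "y \<in> vertices (Zr {v})" "((rv v, i), y) \<in> conn {v}" "fst y = {w'}"
      using lift_uniq[OF vX rv_Z[OF vX i] Tw] by blast
    obtain y' where y': "y' \<in> vertices (Zr {v})" "((rv v, i), y') \<in> conn {v}" "fst y' = {w}"
      using lift_uniq[OF vX rv_Z[OF vX i] Tw2] by blast
    have yZ: "y \<in> vertices Z" using y(1) vZr by blast
    have y'Z: "y' \<in> vertices Z" using y'(1) vZr by blast
    have c1: "(y, (rv w, j)) \<in> conn {w}"
      using LE'[OF e1 yZ] y(3) ww vw T conn_sym[OF y(2)] by (auto simp: insert_commute)
    have c2: "(y', (rv w', j')) \<in> conn {w'}"
      using LE'[OF e2 y'Z] y'(3) ww vw T conn_sym[OF y'(2)] by (auto simp: insert_commute)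
    have ww'F: "{{w'},{w}} \<in> Fr {v}"
    proof (rule Fr_pairI)
      show "{{w'},{w}} \<in> F" using F_pair[of "{w'}" "{w}"] True ww ww' by (auto simp: insert_commute)
      show "({w'} \<union> {w}) \<inter> {v} = {}" using vw by auto
      show "{w'} \<union> {w} \<union> {v} \<in> X" using T by (simp add: insert_commute)
    qed
    have yy': "{y,y'} \<in> Z" using lift_edge[OF vX rv_Z[OF vX i] y(1,2) y'(1,2)] y(3) y'(3) ww'F by simp
    have triF: "{{v},{w},{w'}} \<in> F" using F_triple[of "{v}" "{w}" "{w'}"] True vw ww T by (auto simp: insert_commute)
    obtain \<sigma> where \<sigma>: "\<sigma> \<in> Z" "y \<in> \<sigma>" "fst ` \<sigma> = {{v},{w},{w'}}"
      using lift[OF triF yZ] y(3) by auto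
    obtain a where a: "a \<in> \<sigma>" "fst a = {v}" using img_obtain[OF \<sigma>(3), of "{v}"] by blast
    obtain b where b: "b \<in> \<sigma>" "fst b = {w}" using img_obtain[OF \<sigma>(3), of "{w}"] by blast
    have "{y,b} \<subseteq> \<sigma>" "{y',a} \<subseteq> \<sigma> \<or> True" "{y,a} \<subseteq> \<sigma>" "{b,a} \<subseteq> \<sigma>" using a b \<sigma>(2) by auto
    then have yb: "{y,b} \<in> Z" and ya: "{y,a} \<in> Z" and ba: "{b,a} \<in> Z" using Zsub[OF \<sigma>(1)] by auto
    have "b = y'" using adj_inj[OF yb yy'] b(2) y'(3) by simp
    then have y'a: "{y',a} \<in> Z" using ba by simp
    have aZ: "a \<in> vertices Z" using vZ_of[OF ya] .
    have F1: "{{w'},{v}} \<in> Fr {w}"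
    proof (rule Fr_pairI)
      show "{{w'},{v}} \<in> F" using F_pair[of "{w'}" "{v}"] True vw Xsub[OF T, of "{v,w'}"] by (auto simp: insert_commute)
      show "({w'} \<union> {v}) \<inter> {w} = {}" using ww vw by auto
      show "{w'} \<union> {v} \<union> {w} \<in> X" using T by (simp add: insert_commute)
    qed
    have F2: "{{w},{v}} \<in> Fr {w'}"
    proof (rule Fr_pairI)
      show "{{w},{v}} \<in> F" using F_pair[of "{w}" "{v}"] True vw Xsub[OF T, of "{v,w}"] by (auto simp: insert_commute)
      show "({w} \<union> {v}) \<inter> {w'} = {}" using ww vw by auto
      show "{w} \<union> {v} \<union> {w'} \<in> X" using T by (simp add: insert_commute)
    qed
    have "{y,a} \<in> Zr {w}" unfolding Zr_def using ya y(3) a(2) F1 by simp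
    then have ca: "(a, (rv w, j)) \<in> conn {w}" using conn_trans[OF conn_sym[OF conn_edge] c1] by blast
    have "{y',a} \<in> Zr {w'}" unfolding Zr_def using y'a y'(3) a(2) F2 by simp
    then have ca': "(a, (rv w', j')) \<in> conn {w'}" using conn_trans[OF conn_sym[OF conn_edge] c2] by blast
    show ?thesis using E_intro[OF ww ww' E_basic(4)[OF e1] E_basic(4)[OF e2] aZ] a(2) ww vw T ca ca'
      by (auto simp: insert_commute)
  qed
qed

end



context setting begin

definition "YV = {a. fst a \<in> vertices X \<and> snd a < l}"
definition "Y = {\<sigma>. finite \<sigma> \<and> \<sigma> \<subseteq> YV \<and> (\<forall>a\<in>\<sigma>. \<forall>b\<in>\<sigma>. a \<noteq> b \<longrightarrow> E a b)}"

lemma E_YV2: assumes "E a b" shows "a \<in> YV \<and> b \<in> YV"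
proof -
  obtain v i w j where ab: "a = (v,i)" "b = (w,j)" by (cases a, cases b)
  then have "E (v,i) (w,j)" using assms by simp
  then show ?thesis using E_basic(3,4,5,6) ab unfolding YV_def by simp
qed

lemma E_YV: assumes "E a b" shows "a \<in> YV" "b \<in> YV"
  using E_YV2[OF assms] by auto

lemma E_ne: "E a b \<Longrightarrow> fst a \<noteq> fst b" unfolding E_def by blast

lemma Y_sc: "simplicial_complex Y"
  unfolding simplicial_complex_def
proof (intro conjI ballI allI impI)
  fix s assume "s \<in> Y" then show "finite s" unfolding Y_def by blast
next
  fix s t assume s: "s \<in> Y" "t \<subseteq> s"
  then have "finite t" "t \<subseteq> YV" "\<forall>a\<in>t. \<forall>b\<in>t. a \<noteq> b \<longrightarrow> E a b" unfolding Y_def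
    by (blast intro: finite_subset)+
  then show "t \<in> Y" unfolding Y_def by blast
qed

lemma Y_pair: "{a,b} \<in> Y \<longleftrightarrow> (a = b \<and> a \<in> YV) \<or> E a b"
proof
  assume "{a,b} \<in> Y" then show "(a = b \<and> a \<in> YV) \<or> E a b" unfolding Y_def by blast
next
  assume h: "(a = b \<and> a \<in> YV) \<or> E a b"
  show "{a,b} \<in> Y"
  proof (cases "E a b")
    case True
    then have "a \<in> YV" "b \<in> YV" "E b a" using E_YV E_sym by blast+
    then show ?thesis unfolding Y_def using True by blast
  next
    case False
    then have "a = b" "a \<in> YV" using h by auto
    then show ?thesis unfolding Y_def by simp
  qed
qed

lemma vY: "vertices Y = YV"
  unfolding vertices_def Y_def by auto

lemma Y_inj: "\<sigma> \<in> Y \<Longrightarrow> inj_on fst \<sigma>"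
  unfolding Y_def inj_on_def using E_ne by blast

lemma Y_img: assumes "\<sigma> \<in> Y" shows "fst ` \<sigma> \<in> X"
proof -
  have f: "finite (fst ` \<sigma>)" using assms unfolding Y_def by auto
  have v: "fst ` \<sigma> \<subseteq> vertices X" using assms unfolding Y_def YV_def by auto
  have p: "\<forall>u\<in>fst ` \<sigma>. \<forall>w\<in>fst ` \<sigma>. u \<noteq> w \<longrightarrow> {u, w} \<in> X"
  proof (intro ballI impI)
    fix u w assume "u \<in> fst ` \<sigma>" "w \<in> fst ` \<sigma>" "u \<noteq> w"
    then obtain a b where "a \<in> \<sigma>" "b \<in> \<sigma>" "u = fst a" "w = fst b" "a \<noteq> b" by auto
    then have "E a b" using assms unfolding Y_def by blast
    then show "{u,w} \<in> X" unfolding E_def using \<open>u = fst a\<close> \<open>w = fst b\<close> by simp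
  qed
  have c: "\<And>s. finite s \<Longrightarrow> s \<subseteq> vertices X \<Longrightarrow> (\<forall>u\<in>s. \<forall>v\<in>s. u \<noteq> v \<longrightarrow> {u,v} \<in> X) \<Longrightarrow> s \<in> X"
    using clique unfolding clique_complex_def by blast
  show ?thesis using c[OF f v p] .
qed

lemma vlinkY: assumes "a \<in> YV" shows "vertices (link Y {a}) = {b. E a b}"
proof -
  have "vertices (link Y {a}) = {b. b \<noteq> a \<and> {a,b} \<in> Y}" by (rule vert_link)
  also have "\<dots> = {b. E a b}"
  proof (intro set_eqI iffI)
    fix b assume "b \<in> {b. b \<noteq> a \<and> {a,b} \<in> Y}"
    then show "b \<in> {b. E a b}" using Y_pair[of a b] by auto
  next
    fix b assume "b \<in> {b. E a b}"
    then have "E a b" by simp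
    then have "b \<noteq> a" using E_ne by blast
    then show "b \<in> {b. b \<noteq> a \<and> {a,b} \<in> Y}" using Y_pair[of a b] \<open>E a b\<close> by simp
  qed
  finally show ?thesis .
qed

lemma l_pos: "0 < l"
proof -
  obtain T where T: "T \<in> X" "card T = d + 1" using pure unfolding pure_complex_def by blast
  have "d1 + 1 \<le> card T" using T dim by simp
  then obtain t where t: "t \<subseteq> T" "card t = d1 + 1" by (meson obtain_subset_with_card_n)
  have "t \<in> vertices F" using vF t Xsub[OF T(1) t(1)] by simp
  moreover have "fst ` vertices Z = vertices F" using cZ unfolding covering_map_def by (elim conjE)
  ultimately have "t \<in> fst ` vertices Z" by simp
  then obtain z where "z \<in> vertices Z" by blast
  then have "snd z < l" using vZ' by blast
  then show ?thesis by simp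
qed

lemma Y_link_iso: assumes a: "a \<in> YV" shows "simplicial_iso fst (link Y {a}) (link X {fst a})"
proof (rule isoI)
  obtain v i where vi: "a = (v,i)" by (cases a)
  have vX: "v \<in> vertices X" and i: "i < l" using a vi unfolding YV_def by auto
  have vl: "vertices (link X {v}) = {w. w \<noteq> v \<and> {v,w} \<in> X}" by (rule vert_link)
  have inj: "inj_on fst {b. E a b}"
  proof (rule inj_onI)
    fix b b' assume "b \<in> {b. E a b}" "b' \<in> {b. E a b}" "fst b = fst b'"
    then have "E (v,i) b" "E (v,i) b'" using vi by auto
    then have "E (v,i) (fst b, snd b)" "E (v,i) (fst b', snd b')" by simp_all
    then have "E (v,i) (fst b, snd b)" "E (v,i) (fst b, snd b')" using \<open>fst b = fst b'\<close> by simp_all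
    then have "snd b = snd b'" using LU by blast
    then show "b = b'" using \<open>fst b = fst b'\<close> by (simp add: prod_eq_iff)
  qed
  show "bij_betw fst (vertices (link Y {a})) (vertices (link X {fst a}))"
    unfolding vlinkY[OF a] bij_betw_def
  proof
    show "inj_on fst {b. E a b}" using inj .
    show "fst ` {b. E a b} = vertices (link X {fst a})"
    proof (intro set_eqI iffI)
      fix w assume "w \<in> fst ` {b. E a b}"
      then obtain b where "E (v,i) b" "w = fst b" using vi by auto
      then have "E (v,i) (w, snd b)" by simp
      then show "w \<in> vertices (link X {fst a})" using E_basic vi vl by auto
    next
      fix w assume "w \<in> vertices (link X {fst a})"
      then have "w \<noteq> v" "{v,w} \<in> X" using vi vl by auto
      then obtain j where "E (v,i) (w,j)" using LE[OF _ _ i, of v w] by auto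
      then show "w \<in> fst ` {b. E a b}" using vi by force
    qed
  qed
  fix \<tau> assume \<tau>: "\<tau> \<subseteq> vertices (link Y {a})"
  then have tE: "\<And>b. b \<in> \<tau> \<Longrightarrow> E a b" using vlinkY[OF a] by blast
  have injt: "inj_on fst \<tau>" using inj_on_subset[OF inj] \<tau> vlinkY[OF a] by blast
  have at: "a \<notin> \<tau>" using tE E_ne by blast
  have vt: "v \<notin> fst ` \<tau>" using tE E_ne vi by fastforce
  show "\<tau> \<in> link Y {a} \<longleftrightarrow> fst ` \<tau> \<in> link X {fst a}"
  proof
    assume "\<tau> \<in> link Y {a}"
    then have "\<tau> \<union> {a} \<in> Y" by (simp add: mem_link)
    then have "fst ` (\<tau> \<union> {a}) \<in> X" by (rule Y_img)
    then show "fst ` \<tau> \<in> link X {fst a}" using vt vi by (simp add: mem_link)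
  next
    assume "fst ` \<tau> \<in> link X {fst a}"
    then have S: "fst ` \<tau> \<union> {v} \<in> X" using vi by (simp add: mem_link)
    have ft: "finite \<tau>"
    proof -
      have "finite (fst ` \<tau> \<union> {v})" using sc_fin[OF sX S] .
      then have "finite (fst ` \<tau>)" by simp
      then show ?thesis using finite_imageD[OF _ injt] by blast
    qed
    have "\<tau> \<union> {a} \<in> Y" unfolding Y_def
    proof (intro CollectI conjI ballI impI)
      show "finite (\<tau> \<union> {a})" using ft by simp
      show "\<tau> \<union> {a} \<subseteq> YV" using tE E_YV a by blast
      fix b c assume b: "b \<in> \<tau> \<union> {a}" and c: "c \<in> \<tau> \<union> {a}" and bc: "b \<noteq> c"
      show "E b c"
      proof (cases "b = a")
        case True then show ?thesis using c bc tE by auto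
      next
        case bF: False
        show ?thesis
        proof (cases "c = a")
          case True then show ?thesis using b bF tE E_sym by auto
        next
          case cF: False
          have bt: "b \<in> \<tau>" and ct: "c \<in> \<tau>" using b c bF cF by auto
          have fbc: "fst b \<noteq> fst c" using injt bt ct bc inj_on_eq_iff by metis
          have e1: "E (v,i) (fst b, snd b)" and e2: "E (v,i) (fst c, snd c)" using tE[OF bt] tE[OF ct] vi by auto
          have "{v, fst b, fst c} \<subseteq> fst ` \<tau> \<union> {v}" using bt ct by auto
          then have "{v, fst b, fst c} \<in> X" using Xsub[OF S] by blast
          then have "E (fst b, snd b) (fst c, snd c)" using tri[OF e1 e2 fbc] by blast
          then show ?thesis by simp
        qed
      qed
    qed
    then show "\<tau> \<in> link Y {a}" using at by (simp add: mem_link)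
  qed
qed

lemma Y_cov: "l_covering_map l fst Y X"
proof -
  have hom: "simplicial_hom fst Y X" unfolding simplicial_hom_def
    using Y_img vY unfolding YV_def by auto
  have surj: "fst ` vertices Y = vertices X"
  proof (intro set_eqI iffI)
    fix v assume "v \<in> fst ` vertices Y" then show "v \<in> vertices X" using vY unfolding YV_def by auto
  next
    fix v assume "v \<in> vertices X"
    then have "(v,0) \<in> vertices Y" using vY l_pos unfolding YV_def by auto
    then show "v \<in> fst ` vertices Y" by force
  qed
  have fib: "{w \<in> vertices Y. fst w = v} = (\<lambda>i. (v,i)) ` {0..<l}" if "v \<in> vertices X" for v
    using that vY unfolding YV_def by force
  have "\<forall>v\<in>vertices X. finite {w \<in> vertices Y. fst w = v} \<and> card {w \<in> vertices Y. fst w = v} = l"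
  proof
    fix v assume "v \<in> vertices X"
    moreover have "inj_on (\<lambda>i. (v,i)) {0..<l}" by (simp add: inj_on_def)
    ultimately show "finite {w \<in> vertices Y. fst w = v} \<and> card {w \<in> vertices Y. fst w = v} = l"
      using fib by (simp add: card_image)
  qed
  moreover have "covering_map fst Y X" unfolding covering_map_def
    using hom surj Y_link_iso vY by blast
  ultimately show ?thesis unfolding l_covering_map_def using Y_sc by blast
qed

end



context setting begin

definition "adjY z y \<longleftrightarrow> {z,y} \<in> Z \<and> fst y \<inter> fst z = {} \<and> fst y \<union> fst z \<in> X"
definition "\<kappa> z = {a. fst a \<in> fst z \<and> snd a < l \<and> (\<exists>y. adjY z y \<and> (y,(rv (fst a), snd a)) \<in> conn {fst a})}"

lemma adj_ex: assumes z: "z \<in> vertices Z" shows "\<exists>y. adjY z y"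
proof -
  have s: "fst z \<in> X" "card (fst z) = d1+1" using vZ_card[OF z] by auto
  have "card (fst z) + (d1+1) \<le> d + 1" using s dim by simp
  then obtain t where t: "card t = d1+1" "t \<inter> fst z = {}" "t \<union> fst z \<in> X" using room[OF s(1)] by blast
  have "{fst z, t} \<in> F" using F_pair[OF s(2) t(1)] t(2,3) by (simp add: Int_commute Un_commute)
  then obtain \<sigma> where \<sigma>: "\<sigma> \<in> Z" "z \<in> \<sigma>" "fst ` \<sigma> = {fst z, t}" using lift[OF _ z] by blast
  obtain y where y: "y \<in> \<sigma>" "fst y = t" using img_obtain[OF \<sigma>(3), of t] by blast
  have "{z,y} \<subseteq> \<sigma>" using y \<sigma>(2) by blast
  then have "{z,y} \<in> Z" using Zsub[OF \<sigma>(1)] by simp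
  then show ?thesis unfolding adjY_def using y(2) t by blast
qed

lemma adj_vert: assumes z: "z \<in> vertices Z" and y: "adjY z y" and v: "v \<in> fst z"
  shows "y \<in> vertices (Zr {v})" "v \<in> vertices X" "y \<in> vertices Z"
proof -
  have yy: "{z,y} \<in> Z" "fst y \<inter> fst z = {}" "fst y \<union> fst z \<in> X" using y unfolding adjY_def by auto
  show yZ: "y \<in> vertices Z" using vZ_of[OF yy(1)] .
  have "fst y \<union> {v} \<subseteq> fst y \<union> fst z" using v by blast
  then have "fst y \<union> {v} \<in> X" using Xsub[OF yy(3)] by simp
  moreover have "fst y \<inter> {v} = {}" using yy(2) v by blast
  ultimately show "y \<in> vertices (Zr {v})" using vZv[OF yZ] by simp
  have "{v} \<subseteq> fst z" using v by simp
  then show "v \<in> vertices X" using Xsub[of "fst z" "{v}"] vZ_card[OF z] by (simp add: vert_iff)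
qed

lemma K1: assumes z: "z \<in> vertices Z" and y: "adjY z y" and v: "v \<in> fst z"
  shows "(v,i) \<in> \<kappa> z \<longleftrightarrow> i < l \<and> (y,(rv v,i)) \<in> conn {v}"
proof
  assume "(v,i) \<in> \<kappa> z"
  then obtain y' where y': "adjY z y'" "(y',(rv v,i)) \<in> conn {v}" and i: "i < l" unfolding \<kappa>_def by auto
  have "(y,y') \<in> conn {v}" using key2[OF z v] y y' unfolding adjY_def by blast
  then show "i < l \<and> (y,(rv v,i)) \<in> conn {v}" using conn_trans[OF _ y'(2)] i by blast
next
  assume "i < l \<and> (y,(rv v,i)) \<in> conn {v}"
  then show "(v,i) \<in> \<kappa> z" unfolding \<kappa>_def by (simp only: mem_Collect_eq fst_conv snd_conv) (use v y in blast)
qed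

lemma K2: assumes z: "z \<in> vertices Z" and v: "v \<in> fst z"
  shows "\<exists>!i. (v,i) \<in> \<kappa> z"
proof -
  obtain y where y: "adjY z y" using adj_ex[OF z] by blast
  have "\<exists>!i. i < l \<and> (y, (rv v, i)) \<in> conn {v}" using idx[OF adj_vert(2,1)[OF z y v]] .
  then show ?thesis using K1[OF z y v] by simp
qed

lemma \<kappa>_fst: assumes z: "z \<in> vertices Z" shows "fst ` \<kappa> z = fst z"
proof (intro set_eqI iffI)
  fix v assume "v \<in> fst ` \<kappa> z" then show "v \<in> fst z" unfolding \<kappa>_def by auto
next
  fix v assume v: "v \<in> fst z"
  then obtain i where "(v,i) \<in> \<kappa> z" using K2[OF z v] by blast
  then show "v \<in> fst ` \<kappa> z" by force
qed

lemma \<kappa>_inj: assumes z: "z \<in> vertices Z" shows "inj_on fst (\<kappa> z)"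
proof (rule inj_onI)
  fix a b assume a: "a \<in> \<kappa> z" and b: "b \<in> \<kappa> z" and e: "fst a = fst b"
  have "fst a \<in> fst z" using a unfolding \<kappa>_def by auto
  moreover have "(fst a, snd a) \<in> \<kappa> z" "(fst b, snd b) \<in> \<kappa> z" using a b by auto
  moreover then have "(fst a, snd b) \<in> \<kappa> z" using e by simp
  ultimately have "snd a = snd b" using K2[OF z] by blast
  then show "a = b" using e by (simp add: prod_eq_iff)
qed

lemma \<kappa>_YV: assumes z: "z \<in> vertices Z" shows "\<kappa> z \<subseteq> YV"
proof
  fix a assume a: "a \<in> \<kappa> z"
  then have v: "fst a \<in> fst z" "snd a < l" unfolding \<kappa>_def by auto
  obtain y where "adjY z y" using adj_ex[OF z] by blast
  then show "a \<in> YV" using adj_vert(2)[OF z _ v(1)] v(2) unfolding YV_def by blast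
qed

lemma K3: assumes z: "z \<in> vertices Z" shows "\<kappa> z \<in> Y" "card (\<kappa> z) = d1 + 1"
proof -
  obtain y where y: "adjY z y" using adj_ex[OF z] by blast
  have yy: "{z,y} \<in> Z" "fst y \<inter> fst z = {}" "fst y \<union> fst z \<in> X" using y unfolding adjY_def by auto
  have fz: "finite (fst z)" "card (fst z) = d1 + 1" "fst z \<in> X" using vZ_card[OF z] sc_fin[OF sX] by auto
  have fin: "finite (\<kappa> z)" using finite_imageD[OF _ \<kappa>_inj[OF z]] \<kappa>_fst[OF z] fz(1) by simp
  show "card (\<kappa> z) = d1 + 1" using card_image[OF \<kappa>_inj[OF z]] \<kappa>_fst[OF z] fz(2) by simp
  show "\<kappa> z \<in> Y" unfolding Y_def
  proof (intro CollectI conjI ballI impI)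
    show "finite (\<kappa> z)" using fin .
    show "\<kappa> z \<subseteq> YV" using \<kappa>_YV[OF z] .
    fix a b assume a: "a \<in> \<kappa> z" and b: "b \<in> \<kappa> z" and ab: "a \<noteq> b"
    have ne: "fst a \<noteq> fst b" using \<kappa>_inj[OF z] a b ab inj_on_eq_iff by metis
    have va: "fst a \<in> fst z" and vb: "fst b \<in> fst z" using a b unfolding \<kappa>_def by auto
    have "(fst a, snd a) \<in> \<kappa> z" "(fst b, snd b) \<in> \<kappa> z" using a b by auto
    then have ca: "snd a < l \<and> (y,(rv (fst a), snd a)) \<in> conn {fst a}"
      and cb: "snd b < l \<and> (y,(rv (fst b), snd b)) \<in> conn {fst b}"
      using iffD1[OF K1[OF z y va]] iffD1[OF K1[OF z y vb]] by auto
    have s1: "{fst a, fst b} \<subseteq> fst z" using va vb by blast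
    have s2: "fst y \<union> {fst a, fst b} \<subseteq> fst y \<union> fst z" using va vb by blast
    have "E (fst a, snd a) (fst b, snd b)"
    proof (rule E_intro[OF ne])
      show "{fst a, fst b} \<in> X" using Xsub[OF fz(3) s1] .
      show "fst y \<union> {fst a, fst b} \<in> X" using Xsub[OF yy(3) s2] .
      show "fst y \<inter> {fst a, fst b} = {}" using yy(2) va vb by blast
      show "y \<in> vertices Z" using vZ_of[OF yy(1)] .
    qed (use ca cb in auto)
    then show "E a b" by simp
  qed
qed

lemma K3v: assumes z: "z \<in> vertices Z" shows "\<kappa> z \<in> vertices (faces_complex d1 Y)"
  unfolding vert_fc faces_of_dim_iff using K3[OF z] by simp

lemma K4: "inj_on \<kappa> (vertices Z)"
proof (rule inj_onI)
  fix z z' assume z: "z \<in> vertices Z" and z': "z' \<in> vertices Z" and e: "\<kappa> z = \<kappa> z'"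
  have s: "fst z = fst z'" using \<kappa>_fst[OF z] \<kappa>_fst[OF z'] e by simp
  obtain y where y: "adjY z y" using adj_ex[OF z] by blast
  have yy: "{z,y} \<in> Z" "fst y \<inter> fst z = {}" "fst y \<union> fst z \<in> X" using y unfolding adjY_def by auto
  have s2: "card (fst z) = d1 + 1" using vZ_card[OF z] by simp
  have yc: "card (fst y) = d1 + 1" using vZ_card[OF vZ_of[OF yy(1)]] by simp
  have c': "card (fst z') = d1 + 1" using s2 by (simp add: s[symmetric])
  have d': "fst z' \<inter> fst y = {}" using yy(2) by (simp add: s[symmetric] Int_commute)
  have u': "fst z' \<union> fst y \<in> X" using yy(3) by (simp add: s[symmetric] Un_commute)
  have "{fst z', fst y} \<in> F" using F_pair[OF c' yc d' u'] .
  then have "\<exists>\<sigma>\<in>Z. z' \<in> \<sigma> \<and> fst ` \<sigma> = {fst z', fst y}" by (rule lift[OF _ z']) simp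
  then obtain \<sigma> where \<sigma>: "\<sigma> \<in> Z" "z' \<in> \<sigma>" "fst ` \<sigma> = {fst z', fst y}" by blast
  obtain y' where y': "y' \<in> \<sigma>" "fst y' = fst y" using img_obtain[OF \<sigma>(3), of "fst y"] by blast
  have "{z',y'} \<subseteq> \<sigma>" using y' \<sigma>(2) by blast
  then have zy': "{z',y'} \<in> Z" using Zsub[OF \<sigma>(1)] by simp
  have ay': "adjY z' y'" unfolding adjY_def using zy' y' yy s by simp
  have "fst z \<noteq> {}" using s2 by auto
  then obtain v where v: "v \<in> fst z" by blast
  obtain i where i: "(v,i) \<in> \<kappa> z" using K2[OF z v] by blast
  have c1: "(y,(rv v,i)) \<in> conn {v}" using K1[OF z y v] i by simp
  have v': "v \<in> fst z'" using v s by simp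
  have i': "(v,i) \<in> \<kappa> z'" using i e by simp
  have c2: "(y',(rv v,i)) \<in> conn {v}" using iffD1[OF K1[OF z' ay' v'] i'] by simp
  have vX: "v \<in> vertices X" using adj_vert(2)[OF z y v] .
  have yv: "y \<in> vertices (Zr {v})" using adj_vert(1)[OF z y v] .
  have y'v: "y' \<in> vertices (Zr {v})" using adj_vert(1)[OF z' ay'] s v by simp
  have "fst y \<in> vertices (Fr {v})" using yv vZr by blast
  then have "\<exists>!u. u \<in> vertices (Zr {v}) \<and> (y,u) \<in> conn {v} \<and> fst u = fst y" using lift_uniq[OF vX yv] by blast
  moreover have "(y,y') \<in> conn {v}" using conn_trans[OF c1 conn_sym[OF c2]] .
  ultimately have "y' = y" using yv y'v y'(2) conn_refl[of y "{v}"] by (metis (no_types, lifting))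
  then have "{y,z'} \<in> Z" "{y,z} \<in> Z" using zy' yy(1) by (auto simp: insert_commute)
  then show "z = z'" using adj_inj[of y z z'] s by simp
qed

end



context setting begin

lemma Z_hom: "\<sigma> \<in> Z \<Longrightarrow> fst ` \<sigma> \<in> F"
proof -
  have "simplicial_hom fst Z F" using cZ unfolding covering_map_def by (elim conjE)
  then show "\<sigma> \<in> Z \<Longrightarrow> fst ` \<sigma> \<in> F" unfolding simplicial_hom_def by (elim conjE) (erule bspec)
qed

lemma F_disj: "S \<in> F \<Longrightarrow> s \<in> S \<Longrightarrow> s' \<in> S \<Longrightarrow> s \<noteq> s' \<Longrightarrow> s \<inter> s' = {}"
  unfolding faces_complex_def by blast

lemma F_union: "S \<in> F \<Longrightarrow> \<Union>S \<in> X"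
  unfolding faces_complex_def by blast

lemma Y_E: "\<sigma> \<in> Y \<Longrightarrow> a \<in> \<sigma> \<Longrightarrow> b \<in> \<sigma> \<Longrightarrow> a \<noteq> b \<Longrightarrow> E a b"
  unfolding Y_def by blast

lemma Y_fin: "\<sigma> \<in> Y \<Longrightarrow> finite \<sigma>"
  unfolding Y_def by blast

lemma K5: assumes st: "st \<in> vertices (faces_complex d1 Y)" shows "st \<in> \<kappa> ` vertices Z"
proof -
  have stY: "st \<in> Y" and cst: "card st = d1 + 1" using st unfolding vert_fc faces_of_dim_iff by auto
  let ?s = "fst ` st"
  have sX': "?s \<in> X" using Y_img[OF stY] .
  have injs: "inj_on fst st" using Y_inj[OF stY] .
  have cs: "card ?s = d1 + 1" using card_image[OF injs] cst by simp
  have "st \<noteq> {}" using cst by auto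
  then obtain a0 where a0: "a0 \<in> st" by blast
  obtain v0 i0 where vi0: "a0 = (v0,i0)" by (cases a0)
  have stYV: "st \<subseteq> YV" using stY unfolding Y_def by blast
  have v0X: "v0 \<in> vertices X" and i0: "i0 < l" using stYV a0 vi0 unfolding YV_def by auto
  have v0s: "v0 \<in> ?s" using a0 vi0 by force
  have "card ?s + (d1+1) \<le> d + 1" using cs dim by simp
  then obtain t where t: "card t = d1+1" "t \<inter> ?s = {}" "t \<union> ?s \<in> X" using room[OF sX'] by blast
  have tX: "t \<in> X" using Xsub[OF t(3), of t] by blast
  have "t \<union> {v0} \<subseteq> t \<union> ?s" using v0s by blast
  then have "t \<union> {v0} \<in> X" using Xsub[OF t(3)] by simp
  moreover have "t \<inter> {v0} = {}" using t(2) v0s by blast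
  ultimately have tv: "t \<in> vertices (Fr {v0})" using vFr tX t(1) by simp
  obtain y where y: "y \<in> vertices (Zr {v0})" "((rv v0, i0), y) \<in> conn {v0}" "fst y = t"
    using lift_uniq[OF v0X rv_Z[OF v0X i0] tv] by blast
  have yZ: "y \<in> vertices Z" using y(1) vZr by blast
  have "{t, ?s} \<in> F" using F_pair[OF t(1) cs t(2) t(3)] .
  then have "\<exists>\<sigma>\<in>Z. y \<in> \<sigma> \<and> fst ` \<sigma> = {t, ?s}" by (rule lift[OF _ yZ]) (simp add: y(3))
  then obtain \<sigma> where \<sigma>: "\<sigma> \<in> Z" "y \<in> \<sigma>" "fst ` \<sigma> = {t, ?s}" by blast
  obtain z where z: "z \<in> \<sigma>" "fst z = ?s" using img_obtain[OF \<sigma>(3), of ?s] by blast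
  have "{z,y} \<subseteq> \<sigma>" using z \<sigma>(2) by blast
  then have zy: "{z,y} \<in> Z" using Zsub[OF \<sigma>(1)] by simp
  have zZ: "z \<in> vertices Z" using vZ_of[of y z] zy by (simp add: insert_commute)
  have ay: "adjY z y" unfolding adjY_def using zy y(3) z(2) t(2,3) by simp
  have sub: "st \<subseteq> \<kappa> z"
  proof
    fix a assume a: "a \<in> st"
    obtain v i where vi: "a = (v,i)" by (cases a)
    have vs: "v \<in> fst z" using a vi z(2) by force
    have i: "i < l" using stYV a vi unfolding YV_def by auto
    have "(y, (rv v, i)) \<in> conn {v}"
    proof (cases "a = a0")
      case True
      then show ?thesis using vi vi0 conn_sym[OF y(2)] by simp
    next
      case False
      then have e: "E a0 a" using Y_E[OF stY a0 a] by blast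
      then have e': "E (v0,i0) (v,i)" using vi vi0 by simp
      have "fst y \<union> {v0,v} \<subseteq> t \<union> ?s" using v0s vs z(2) y(3) by blast
      then have "fst y \<union> {v0,v} \<in> X" using Xsub[OF t(3)] by simp
      moreover have "fst y \<inter> {v0,v} = {}" using t(2) v0s vs z(2) y(3) by blast
      ultimately show ?thesis using LE'[OF e' yZ] conn_sym[OF y(2)] by blast
    qed
    then show "a \<in> \<kappa> z" using K1[OF zZ ay vs] i vi by simp
  qed
  have "\<kappa> z \<subseteq> st"
  proof
    fix b assume b: "b \<in> \<kappa> z"
    then have "fst b \<in> fst ` st" using \<kappa>_fst[OF zZ] z(2) by blast
    then obtain a where a0: "fst b = fst a" "a \<in> st" by (rule imageE)
    then have a: "a \<in> st" "fst a = fst b" by simp_all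
    then have "a \<in> \<kappa> z" using sub by blast
    then have "a = b" using inj_onD[OF \<kappa>_inj[OF zZ] a(2) _ b] by simp
    then show "b \<in> st" using a(1) by simp
  qed
  then have "\<kappa> z = st" using sub by blast
  then show ?thesis using zZ by blast
qed

lemma pairE:
  assumes S: "S \<in> Z" and z: "z \<in> S" and z': "z' \<in> S" and zz: "z \<noteq> z'"
    and a: "a \<in> \<kappa> z" and b: "b \<in> \<kappa> z'"
  shows "E a b"
proof -
  have SZ: "S \<subseteq> vertices Z" using sc_face_vert[OF sZ S] .
  have zZ: "z \<in> vertices Z" and z'Z: "z' \<in> vertices Z" using SZ z z' by auto
  have zz': "{z,z'} \<in> Z" using Zsub[OF S] z z' by simp
  have SF: "fst ` S \<in> F" using Z_hom[OF S] .
  have ne: "fst z \<noteq> fst z'" using inj_onD[OF cov_inj[OF cZ sZ S] _ z z'] zz by blast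
  have disj: "fst z \<inter> fst z' = {}" using F_disj[OF SF _ _ ne] z z' by blast
  have "fst z \<union> fst z' \<subseteq> \<Union>(fst ` S)" using z z' by blast
  then have U: "fst z \<union> fst z' \<in> X" using Xsub[OF F_union[OF SF]] by simp
  have c1: "card (fst z) = d1+1" and c2: "card (fst z') = d1+1" using vZ_card zZ z'Z by auto
  have fin: "finite (fst z)" "finite (fst z')" using vZ_card[OF zZ] vZ_card[OF z'Z] sc_fin[OF sX] by auto
  have "card (fst z \<union> fst z') = 2*d1 + 2" using card_Un_disjoint[OF fin disj] c1 c2 by simp
  then have "card (fst z \<union> fst z') + (d1+1) \<le> d + 1" using dim by simp
  then obtain t where t: "card t = d1+1" "t \<inter> (fst z \<union> fst z') = {}" "t \<union> (fst z \<union> fst z') \<in> X"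
    using room[OF U] by blast
  have tri: "{fst z, fst z', t} \<in> F"
  proof (rule F_triple[OF c1 c2 t(1) disj])
    show "fst z \<inter> t = {}" "fst z' \<inter> t = {}" using t(2) by blast+
    show "fst z \<union> fst z' \<union> t \<in> X" using t(3) by (simp add: Un_ac)
  qed
  have "\<exists>\<sigma>\<in>Z. z \<in> \<sigma> \<and> fst ` \<sigma> = {fst z, fst z', t}" by (rule lift[OF tri zZ]) simp
  then obtain \<sigma> where \<sigma>: "\<sigma> \<in> Z" "z \<in> \<sigma>" "fst ` \<sigma> = {fst z, fst z', t}" by blast
  obtain u where u: "u \<in> \<sigma>" "fst u = fst z'" using img_obtain[OF \<sigma>(3), of "fst z'"] by blast
  obtain y where y: "y \<in> \<sigma>" "fst y = t" using img_obtain[OF \<sigma>(3), of t] by blast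
  have "{z,u} \<subseteq> \<sigma>" "{z,y} \<subseteq> \<sigma>" "{u,y} \<subseteq> \<sigma>" using u y \<sigma>(2) by auto
  then have zu: "{z,u} \<in> Z" and zy: "{z,y} \<in> Z" and uy: "{u,y} \<in> Z" using Zsub[OF \<sigma>(1)] by auto
  have "u = z'" using adj_inj[OF zu zz'] u(2) by simp
  then have z'y: "{z',y} \<in> Z" using uy by simp
  have "t \<union> fst z \<subseteq> t \<union> (fst z \<union> fst z')" "t \<union> fst z' \<subseteq> t \<union> (fst z \<union> fst z')" by auto
  then have ay: "adjY z y" and ay': "adjY z' y" unfolding adjY_def using zy z'y y(2) t(2) Xsub[OF t(3)] by auto
  obtain v i where vi: "a = (v,i)" by (cases a)
  obtain w j where wj: "b = (w,j)" by (cases b)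
  have v: "v \<in> fst z" using a vi \<kappa>_fst[OF zZ] by force
  have w: "w \<in> fst z'" using b wj \<kappa>_fst[OF z'Z] by force
  have ca: "i < l \<and> (y,(rv v,i)) \<in> conn {v}" using K1[OF zZ ay v] a vi by simp
  have cb: "j < l \<and> (y,(rv w,j)) \<in> conn {w}" using K1[OF z'Z ay' w] b wj by simp
  have vw: "v \<noteq> w" using disj v w by blast
  have "{v,w} \<subseteq> fst z \<union> fst z'" using v w by blast
  then have vwX: "{v,w} \<in> X" using Xsub[OF U] by simp
  have "fst y \<union> {v,w} \<subseteq> t \<union> (fst z \<union> fst z')" using v w y(2) by blast
  then have yX: "fst y \<union> {v,w} \<in> X" using Xsub[OF t(3)] by simp
  have yd: "fst y \<inter> {v,w} = {}" using t(2) v w y(2) by blast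
  have "E (v,i) (w,j)" using E_intro[OF vw vwX _ _ vZ_of[OF zy] yd yX] ca cb by blast
  then show ?thesis using vi wj by simp
qed

lemma K6a: assumes S: "S \<in> Z" shows "\<kappa> ` S \<in> faces_complex d1 Y"
proof -
  have SZ: "S \<subseteq> vertices Z" using sc_face_vert[OF sZ S] .
  have SF: "fst ` S \<in> F" using Z_hom[OF S] .
  have fS: "finite S" using sc_fin[OF sZ S] .
  have U: "\<Union>(\<kappa> ` S) \<in> Y" unfolding Y_def
  proof (intro CollectI conjI ballI impI)
    have "\<forall>z\<in>S. finite (\<kappa> z)" using Y_fin[OF K3(1)] SZ by blast
    then show "finite (\<Union>(\<kappa> ` S))" using fS by simp
    show "\<Union>(\<kappa> ` S) \<subseteq> YV" using \<kappa>_YV SZ by blast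
    fix a b assume a: "a \<in> \<Union>(\<kappa> ` S)" and b: "b \<in> \<Union>(\<kappa> ` S)" and ab: "a \<noteq> b"
    then obtain z z' where z: "z \<in> S" "a \<in> \<kappa> z" and z': "z' \<in> S" "b \<in> \<kappa> z'" by blast
    show "E a b"
    proof (cases "z = z'")
      case True
      then have "\<kappa> z \<in> Y" using K3(1) SZ z(1) by blast
      then show ?thesis using Y_E z(2) z'(2) True ab by blast
    next
      case False
      show ?thesis by (rule pairE[OF S z(1) z'(1) False z(2) z'(2)])
    qed
  qed
  show ?thesis unfolding faces_complex_def
  proof (intro CollectI conjI ballI impI)
    show "finite (\<kappa> ` S)" using fS by simp
    show "\<kappa> ` S \<subseteq> faces_of_dim Y d1" using K3v SZ vert_fc[of d1 Y] by blast
    show "\<Union>(\<kappa> ` S) \<in> Y" using U .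
    fix p q assume p: "p \<in> \<kappa> ` S" and q: "q \<in> \<kappa> ` S" and pq: "p \<noteq> q"
    then obtain z z' where z: "z \<in> S" "p = \<kappa> z" and z': "z' \<in> S" "q = \<kappa> z'" by blast
    then have "z \<noteq> z'" using pq by blast
    then have ne: "fst z \<noteq> fst z'" using inj_onD[OF cov_inj[OF cZ sZ S] _ z(1) z'(1)] by blast
    have disj: "fst z \<inter> fst z' = {}" using F_disj[OF SF _ _ ne] z(1) z'(1) by blast
    have "fst ` \<kappa> z = fst z" "fst ` \<kappa> z' = fst z'" using \<kappa>_fst SZ z(1) z'(1) by blast+
    then show "p \<inter> q = {}" using disj z(2) z'(2) by blast
  qed
qed

lemma Z_empty: "{} \<in> Z"
proof -
  obtain T where T: "T \<in> X" "card T = d + 1" using pure unfolding pure_complex_def by blast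
  have "d1 + 1 \<le> card T" using T dim by simp
  then obtain t where t: "t \<subseteq> T" "card t = d1 + 1" by (meson obtain_subset_with_card_n)
  have "t \<in> vertices F" using vF t Xsub[OF T(1) t(1)] by simp
  moreover have "fst ` vertices Z = vertices F" using cZ unfolding covering_map_def by (elim conjE)
  ultimately have "t \<in> fst ` vertices Z" by simp
  then obtain z where "z \<in> vertices Z" by blast
  then have "{z} \<in> Z" by (simp add: vert_iff)
  then show ?thesis using Zsub by blast
qed

lemma K6b: assumes SZ: "S \<subseteq> vertices Z" and K: "\<kappa> ` S \<in> faces_complex d1 Y" shows "S \<in> Z"
proof -
  have Kf: "finite (\<kappa> ` S)" and Kd: "\<forall>p\<in>\<kappa> ` S. \<forall>q\<in>\<kappa> ` S. p \<noteq> q \<longrightarrow> p \<inter> q = {}"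
    and U: "\<Union>(\<kappa> ` S) \<in> Y" using K unfolding faces_complex_def by auto
  have injS: "inj_on \<kappa> S" using inj_on_subset[OF K4 SZ] .
  have fS: "finite S" using finite_imageD[OF Kf injS] .
  have Uinj: "inj_on fst (\<Union>(\<kappa> ` S))" using Y_inj[OF U] .
  have disj: "fst z \<inter> fst z' = {}" if z: "z \<in> S" and z': "z' \<in> S" and zz: "z \<noteq> z'" for z z'
  proof (rule ccontr)
    assume "fst z \<inter> fst z' \<noteq> {}"
    then obtain v where v: "v \<in> fst z" "v \<in> fst z'" by blast
    obtain i where i: "(v,i) \<in> \<kappa> z" using K2 SZ z v(1) by blast
    obtain i' where i': "(v,i') \<in> \<kappa> z'" using K2 SZ z' v(2) by blast
    have "(v,i) \<in> \<Union>(\<kappa> ` S)" "(v,i') \<in> \<Union>(\<kappa> ` S)" using i i' z z' by blast+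
    then have "(v,i) = (v,i')" using inj_onD[OF Uinj, of "(v,i)" "(v,i')"] by simp
    then have "(v,i) \<in> \<kappa> z \<inter> \<kappa> z'" using i i' by simp
    moreover have "\<kappa> z \<noteq> \<kappa> z'" using inj_onD[OF injS _ z z'] zz by blast
    ultimately show False using Kd z z' by blast
  qed
  show ?thesis
  proof (cases "S = {}")
    case True then show ?thesis using Z_empty by simp
  next
    case False
    then obtain z0 where z0: "z0 \<in> S" by blast
    have z0Z: "z0 \<in> vertices Z" using SZ z0 by blast
    have cne: "fst z \<noteq> {}" if "z \<in> vertices Z" for z using vZ_card[OF that] by auto
    have SF: "fst ` S \<in> F" unfolding F_iff
    proof (intro conjI ballI impI)
      show "finite (fst ` S)" using fS by simp
      fix s assume "s \<in> fst ` S" then show "s \<in> X" "card s = d1+1" using vZ_card SZ by auto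
    next
      fix s s' assume s: "s \<in> fst ` S" and s': "s' \<in> fst ` S" and ss: "s \<noteq> s'"
      then obtain z z' where "z \<in> S" "z' \<in> S" "s = fst z" "s' = fst z'" by blast
      then show "s \<inter> s' = {}" using disj[of z z'] ss by blast
    next
      have "fst ` \<Union>(\<kappa> ` S) = (\<Union>z\<in>S. fst ` \<kappa> z)" by (simp add: image_UN)
      also have "\<dots> = (\<Union>z\<in>S. fst z)" using \<kappa>_fst SZ by (intro SUP_cong) auto
      finally have "fst ` \<Union>(\<kappa> ` S) = \<Union>(fst ` S)" by simp
      then show "\<Union>(fst ` S) \<in> X" using Y_img[OF U] by simp
    qed
    have "\<exists>\<sigma>\<in>Z. z0 \<in> \<sigma> \<and> fst ` \<sigma> = fst ` S" by (rule lift[OF SF z0Z]) (use z0 in blast)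
    then obtain \<sigma> where \<sigma>: "\<sigma> \<in> Z" "z0 \<in> \<sigma>" "fst ` \<sigma> = fst ` S" by blast
    have inj\<sigma>: "inj_on fst \<sigma>" using cov_inj[OF cZ sZ \<sigma>(1)] .
    have "S \<subseteq> \<sigma>"
    proof
      fix z assume z: "z \<in> S"
      obtain zh where zh: "zh \<in> \<sigma>" "fst zh = fst z" using img_obtain[OF \<sigma>(3), of "fst z"] z by blast
      have zZ: "z \<in> vertices Z" using SZ z by blast
      have zhZ: "zh \<in> vertices Z" using sc_face_vert[OF sZ \<sigma>(1)] zh(1) by blast
      show "z \<in> \<sigma>"
      proof (cases "z = z0")
        case True then show ?thesis using \<sigma>(2) by simp
      next
        case False
        have dz: "fst z \<inter> fst z0 = {}" using disj[OF z z0 False] .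
        have "fst z0 \<noteq> {}" using cne[OF z0Z] .
        then obtain v0 where v0: "v0 \<in> fst z0" by blast
        obtain i0 where i0: "(v0,i0) \<in> \<kappa> z0" using K2[OF z0Z v0] by blast
        have zhz0: "zh \<noteq> z0" using zh(2) dz cne[OF zZ] by auto
        have "\<kappa> zh = \<kappa> z"
        proof (intro set_eqI iffI)
          fix b assume b: "b \<in> \<kappa> zh"
          obtain w j where wj: "b = (w,j)" by (cases b)
          have w: "w \<in> fst z" using b wj \<kappa>_fst[OF zhZ] zh(2) by force
          obtain j' where j': "(w,j') \<in> \<kappa> z" using K2[OF zZ w] by blast
          have e1: "E (v0,i0) (w,j)" using pairE[OF \<sigma>(1) \<sigma>(2) zh(1) zhz0[symmetric] i0] b wj by simp
          have "(v0,i0) \<noteq> (w,j')" using dz v0 w by auto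
          moreover have "(v0,i0) \<in> \<Union>(\<kappa> ` S)" "(w,j') \<in> \<Union>(\<kappa> ` S)" using i0 j' z0 z by blast+
          ultimately have e2: "E (v0,i0) (w,j')" using Y_E[OF U] by blast
          have "j = j'" using LU[OF e1 e2] .
          then show "b \<in> \<kappa> z" using j' wj by simp
        next
          fix b assume b: "b \<in> \<kappa> z"
          obtain w j where wj: "b = (w,j)" by (cases b)
          have w: "w \<in> fst zh" using b wj \<kappa>_fst[OF zZ] zh(2) by force
          obtain j' where j': "(w,j') \<in> \<kappa> zh" using K2[OF zhZ w] by blast
          have e1: "E (v0,i0) (w,j')" using pairE[OF \<sigma>(1) \<sigma>(2) zh(1) zhz0[symmetric] i0 j'] .
          have "(v0,i0) \<noteq> (w,j)" using dz v0 w zh(2) by auto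
          moreover have "(v0,i0) \<in> \<Union>(\<kappa> ` S)" "(w,j) \<in> \<Union>(\<kappa> ` S)" using i0 b wj z0 z by blast+
          ultimately have e2: "E (v0,i0) (w,j)" using Y_E[OF U] by blast
          have "j' = j" using LU[OF e1 e2] .
          then show "b \<in> \<kappa> zh" using j' wj by simp
        qed
        then have "zh = z" using inj_onD[OF K4 _ zhZ zZ] by blast
        then show ?thesis using zh(1) by simp
      qed
    qed
    then show ?thesis using Zsub[OF \<sigma>(1)] by simp
  qed
qed

lemma \<kappa>_iso: "simplicial_iso \<kappa> Z (faces_complex d1 Y)"
proof (rule isoI)
  show "bij_betw \<kappa> (vertices Z) (vertices (faces_complex d1 Y))"
    unfolding bij_betw_def using K4 K3v K5 by blast
  fix S assume S: "S \<subseteq> vertices Z"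
  show "S \<in> Z \<longleftrightarrow> \<kappa> ` S \<in> faces_complex d1 Y" using K6a K6b[OF S] by blast
qed

lemma main_loc: "l_covering_map l fst Y X \<and> simplicial_iso \<kappa> Z (faces_complex d1 Y)
   \<and> (\<forall>z\<in>vertices Z. fst ` \<kappa> z = fst z)"
  using Y_cov \<kappa>_iso \<kappa>_fst by blast

end



theorem lemma3p7:
  fixes X :: "'a set set" and d d1 l :: nat
    and Xt :: "'c set set" and \<nu> :: "'c \<Rightarrow> 'a set"
  assumes "pure_complex d X"
    and "clique_complex X"
    and "3 * d1 + 2 \<le> d"
    and "well_connected d1 X"
    and "l_covering_map l \<nu> Xt (faces_complex d1 X)"
  shows "\<exists>(Y :: ('a \<times> nat) set set) \<rho> \<iota>.
           l_covering_map l \<rho> Y X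
         \<and> simplicial_iso \<iota> (faces_complex d1 Y) Xt
         \<and> (\<forall>s\<in>vertices (faces_complex d1 Y). \<nu> (\<iota> s) = \<rho> ` s)"
proof -
  note cov = assms(5)
  have sXt: "simplicial_complex Xt" and cXt: "covering_map \<nu> Xt (faces_complex d1 X)"
    and fib: "\<forall>v\<in>vertices (faces_complex d1 X). finite {w \<in> vertices Xt. \<nu> w = v} \<and> card {w \<in> vertices Xt. \<nu> w = v} = l"
    using cov unfolding l_covering_map_def by blast+
  have hom: "simplicial_hom \<nu> Xt (faces_complex d1 X)" and surj: "\<nu> ` vertices Xt = vertices (faces_complex d1 X)"
    using cXt unfolding covering_map_def by blast+
  define e where "e s = (SOME h. bij_betw h {w \<in> vertices Xt. \<nu> w = s} {0..<l})" for s
  have e: "bij_betw (e s) {w \<in> vertices Xt. \<nu> w = s} {0..<l}" if s: "s \<in> vertices (faces_complex d1 X)" for s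
  proof -
    have "finite {w \<in> vertices Xt. \<nu> w = s}" "card {w \<in> vertices Xt. \<nu> w = s} = l" using fib s by auto
    then have "\<exists>h. bij_betw h {w \<in> vertices Xt. \<nu> w = s} {0..<l}" using ex_bij_betw_finite_nat by metis
    then show ?thesis unfolding e_def by (rule someI_ex)
  qed
  define \<phi> where "\<phi> x = (\<nu> x, e (\<nu> x) x)" for x
  have \<nu>v: "\<nu> x \<in> vertices (faces_complex d1 X)" if "x \<in> vertices Xt" for x
    using that surj by blast
  have inj: "inj_on \<phi> (vertices Xt)"
  proof (rule inj_onI)
    fix x y assume x: "x \<in> vertices Xt" and y: "y \<in> vertices Xt" and xy: "\<phi> x = \<phi> y"
    then have n: "\<nu> x = \<nu> y" and ee: "e (\<nu> x) x = e (\<nu> x) y" unfolding \<phi>_def by auto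
    have "x \<in> {w \<in> vertices Xt. \<nu> w = \<nu> x}" "y \<in> {w \<in> vertices Xt. \<nu> w = \<nu> x}" using x y n by auto
    then show "x = y" using e[OF \<nu>v[OF x]] ee unfolding bij_betw_def by (metis inj_onD)
  qed
  define Z where "Z = (`) \<phi> ` Xt"
  have covZ: "l_covering_map l fst Z (faces_complex d1 X)"
    unfolding Z_def by (rule transport[OF cov inj]) (simp add: \<phi>_def)
  have vZ: "vertices Z = faces_of_dim X d1 \<times> {0..<l}"
  proof -
    have "vertices Z = \<phi> ` vertices Xt" unfolding Z_def by (rule img_vert[OF sXt inj])
    also have "\<dots> = vertices (faces_complex d1 X) \<times> {0..<l}"
    proof (intro set_eqI iffI)
      fix p assume "p \<in> \<phi> ` vertices Xt"
      then obtain x where x: "x \<in> vertices Xt" "p = \<phi> x" by blast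
      have "e (\<nu> x) x \<in> {0..<l}" using e[OF \<nu>v[OF x(1)]] x(1) unfolding bij_betw_def by blast
      then show "p \<in> vertices (faces_complex d1 X) \<times> {0..<l}" using x \<nu>v[OF x(1)] unfolding \<phi>_def by simp
    next
      fix p assume p: "p \<in> vertices (faces_complex d1 X) \<times> {0..<l}"
      obtain s i where si: "p = (s,i)" by (cases p)
      have s: "s \<in> vertices (faces_complex d1 X)" and i: "i \<in> {0..<l}" using p si by auto
      then have "i \<in> e s ` {w \<in> vertices Xt. \<nu> w = s}" using e[OF s] unfolding bij_betw_def by simp
      then obtain x where x: "x \<in> vertices Xt" "\<nu> x = s" "i = e s x" by blast
      then show "p \<in> \<phi> ` vertices Xt" unfolding \<phi>_def using si by force
    qed
    finally show ?thesis by (simp add: vert_fc)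
  qed
  interpret S: setting X d d1 l Z
    by (unfold_locales) (use assms covZ vZ in auto)
  have ml: "l_covering_map l fst S.Y X" "simplicial_iso S.\<kappa> Z (faces_complex d1 S.Y)"
    "\<forall>z\<in>vertices Z. fst ` S.\<kappa> z = fst z" using S.main_loc by blast+
  have isoZ: "simplicial_iso \<phi> Xt Z" unfolding Z_def by (rule img_iso[OF sXt inj])
  define \<psi> where "\<psi> = inv_into (vertices Xt) \<phi>"
  define \<kappa>i where "\<kappa>i = inv_into (vertices Z) S.\<kappa>"
  have iso1: "simplicial_iso \<psi> Z Xt" unfolding \<psi>_def by (rule iso_inv[OF isoZ])
  have iso2: "simplicial_iso \<kappa>i (faces_complex d1 S.Y) Z" unfolding \<kappa>i_def by (rule iso_inv[OF ml(2)])
  have iso: "simplicial_iso (\<psi> \<circ> \<kappa>i) (faces_complex d1 S.Y) Xt" by (rule iso_comp[OF iso2 iso1])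
  have comm: "\<nu> ((\<psi> \<circ> \<kappa>i) s) = fst ` s" if s: "s \<in> vertices (faces_complex d1 S.Y)" for s
  proof -
    have b\<kappa>: "bij_betw S.\<kappa> (vertices Z) (vertices (faces_complex d1 S.Y))" using iso_bij[OF ml(2)] .
    have "s \<in> S.\<kappa> ` vertices Z" using s b\<kappa> unfolding bij_betw_def by simp
    then have k1: "S.\<kappa> (\<kappa>i s) = s" unfolding \<kappa>i_def by (rule f_inv_into_f)
    have k2: "\<kappa>i s \<in> vertices Z" using s iso_bij[OF iso2] unfolding bij_betw_def by blast
    have bZ: "bij_betw \<phi> (vertices Xt) (vertices Z)" using iso_bij[OF isoZ] .
    have "\<kappa>i s \<in> \<phi> ` vertices Xt" using k2 bZ unfolding bij_betw_def by simp
    then have p1: "\<phi> (\<psi> (\<kappa>i s)) = \<kappa>i s" unfolding \<psi>_def by (rule f_inv_into_f)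
    have "\<nu> (\<psi> (\<kappa>i s)) = fst (\<phi> (\<psi> (\<kappa>i s)))" unfolding \<phi>_def by simp
    also have "\<dots> = fst (\<kappa>i s)" using p1 by simp
    also have "\<dots> = fst ` S.\<kappa> (\<kappa>i s)" using ml(3) k2 by simp
    also have "\<dots> = fst ` s" using k1 by simp
    finally show ?thesis by simp
  qed
  show ?thesis using ml(1) iso comm by blast
qed



end
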